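(* Let $f,g\in\mathbb L^2([0,1])$ with $\Delta=\|f-g\|>0$, let $X$ be distributed according to the model below, and set $\delta=\dfrac{e^{-(1+\Delta/2)^2/2}}{2\sqrt{2\pi}}$. Then for all $\epsilon\le\frac14\wedge\Delta$, \[ \mathbb P\Big(\delta\epsilon\le\big|\eta(X)-\tfrac12\big|\le\epsilon\Big)\ge\delta\frac\epsilon\Delta. \]
   Context: Model: $Y\sim\mathrm{Bernoulli}(1/2)$ independent of a standard Brownian motion $W$ on $[0,1]$, and $dX(t)=Yf(t)\,dt+(1-Y)g(t)\,dt+dW(t)$. Regression function $\eta(X)=\mathbb P(Y=1\mid X)=\dfrac{\exp(\int_0^1(f-g)\,dX-\frac12\|f\|^2+\frac12\|g\|^2)}{1+\exp(\int_0^1(f-g)\,dX-\frac12\|f\|^2+\frac12\|g\|^2)}$. $\|\cdot\|$ is the $\mathbb L^2([0,1])$ norm; $a\wedge b=\min\{a,b\}$. *)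

theory Defs
  imports "HOL-Probability.Probability"
begin

definition L2_01 :: "(real \<Rightarrow> real) \<Rightarrow> bool" where
  "L2_01 h \<longleftrightarrow> h \<in> borel_measurable lborel \<and>
     set_integrable lborel {0..1} (\<lambda>t. (h t)\<^sup>2)"

definition L2_norm_01 :: "(real \<Rightarrow> real) \<Rightarrow> real" where
  "L2_norm_01 h = sqrt (LBINT t:{0..1}. (h t)\<^sup>2)"

definition brownian_motion_01 :: "'a measure \<Rightarrow> (real \<Rightarrow> 'a \<Rightarrow> real) \<Rightarrow> bool" where
  "brownian_motion_01 M W \<longleftrightarrow>
     prob_space M \<and>
     (\<forall>t\<in>{0..1}. W t \<in> borel_measurable M) \<and>
     (AE \<omega> in M. W 0 \<omega> = 0) \<and>
     (AE \<omega> in M. continuous_on {0..1} (\<lambda>t. W t \<omega>)) \<and>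
     (\<forall>s t. 0 \<le> s \<longrightarrow> s < t \<longrightarrow> t \<le> 1 \<longrightarrow>
        distributed M lborel (\<lambda>\<omega>. W t \<omega> - W s \<omega>)
          (\<lambda>x. ennreal (normal_density 0 (sqrt (t - s)) x))) \<and>
     (\<forall>(ts :: nat \<Rightarrow> real) n. ts 0 \<ge> 0 \<longrightarrow> ts n \<le> 1 \<longrightarrow>
        (\<forall>i<n. ts i < ts (Suc i)) \<longrightarrow>
        prob_space.indep_vars M (\<lambda>_. borel)
          (\<lambda>i \<omega>. W (ts (Suc i)) \<omega> - W (ts i) \<omega>) {..<n})"

text \<open>Dyadic Riemann--Stieltjes approximation of \<open>\<integral>\<^sub>0\<^sup>1 h dX\<close>: h is replaced by
  its averages on the dyadic intervals of level n.\<close>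
definition dyadic_stoch_sum ::
    "(real \<Rightarrow> 'a \<Rightarrow> real) \<Rightarrow> (real \<Rightarrow> real) \<Rightarrow> nat \<Rightarrow> 'a \<Rightarrow> real" where
  "dyadic_stoch_sum X h n \<omega> =
     (\<Sum>k<2^n. (2^n * (LBINT s:{real k / 2^n .. real (Suc k) / 2^n}. h s)) *
        (X (real (Suc k) / 2^n) \<omega> - X (real k / 2^n) \<omega>))"

text \<open>I is (a version of) the stochastic (Wiener) integral \<open>\<integral>\<^sub>0\<^sup>1 h dX\<close>:
  the limit in probability of the dyadic sums.\<close>
definition is_stoch_integral ::
    "'a measure \<Rightarrow> (real \<Rightarrow> 'a \<Rightarrow> real) \<Rightarrow> (real \<Rightarrow> real) \<Rightarrow> ('a \<Rightarrow> real) \<Rightarrow> bool" where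
  "is_stoch_integral M X h I \<longleftrightarrow>
     I \<in> borel_measurable M \<and>
     (\<forall>e>0. (\<lambda>n. measure M {\<omega>\<in>space M. \<bar>dyadic_stoch_sum X h n \<omega> - I \<omega>\<bar> > e})
               \<longlonglongrightarrow> 0)"

definition model_X ::
    "(real \<Rightarrow> real) \<Rightarrow> (real \<Rightarrow> real) \<Rightarrow> ('a \<Rightarrow> real) \<Rightarrow> (real \<Rightarrow> 'a \<Rightarrow> real)
      \<Rightarrow> real \<Rightarrow> 'a \<Rightarrow> real" where
  "model_X f g Y W t \<omega> =
     Y \<omega> * (LBINT s:{0..t}. f s) + (1 - Y \<omega>) * (LBINT s:{0..t}. g s) + W t \<omega>"

text \<open>Regression function, given the value I of \<open>\<integral>(f-g) dX\<close>.\<close>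
definition eta_reg :: "(real \<Rightarrow> real) \<Rightarrow> (real \<Rightarrow> real) \<Rightarrow> real \<Rightarrow> real" where
  "eta_reg f g I =
     (let z = I - (L2_norm_01 f)\<^sup>2 / 2 + (L2_norm_01 g)\<^sup>2 / 2 in exp z / (1 + exp z))"

end

theory Submission
  imports Defs
begin


lemma set_integral_const_Icc:
  fixes a b c :: real assumes "a \<le> b"
  shows "(LBINT x:{a..b}. c) = c * (b - a)"
  using assms by (simp add: set_lebesgue_integral_def measure_lborel_Icc mult.commute)

lemma set_integrable_const_Icc:
  fixes a b c :: real
  shows "set_integrable lborel {a..b} (\<lambda>_. c)"
  by (simp add: set_integrable_def emeasure_lborel_Icc_eq integrable_real_mult_indicator)

lemma L2_meas: "L2_01 u \<Longrightarrow> u \<in> borel_measurable borel"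
  unfolding L2_01_def by simp

lemma L2_int:
  assumes "L2_01 u" shows "set_integrable lborel {0..1} u"
proof (rule set_integrable_bound[where f="\<lambda>t. (u t)\<^sup>2 + 1"])
  show "set_integrable lborel {0..1} (\<lambda>t. (u t)\<^sup>2 + 1)"
    using assms unfolding L2_01_def by (intro set_integral_add set_integrable_const_Icc) auto
  show "set_borel_measurable lborel {0..1} u"
    using assms using L2_meas[OF assms(1)] unfolding set_borel_measurable_def by measurable
  show "AE x in lborel. x \<in> {0..1} \<longrightarrow> norm (u x) \<le> norm ((u x)\<^sup>2 + 1)"
  proof (intro AE_I2 impI)
    fix x
    have "\<bar>u x\<bar> \<le> (u x)\<^sup>2 + 1"
    proof (cases "\<bar>u x\<bar> \<le> 1")
      case True then show ?thesis using zero_le_power2[of "u x"] by linarith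
    next
      case False
      then have "1 * \<bar>u x\<bar> \<le> \<bar>u x\<bar> * \<bar>u x\<bar>" by (intro mult_right_mono) auto
      then show ?thesis by (simp add: power2_eq_square abs_mult_self_eq)
    qed
    then show "norm (u x) \<le> norm ((u x)\<^sup>2 + 1)" by simp
  qed
qed

lemma L2_prod:
  assumes "L2_01 u" "L2_01 v" shows "set_integrable lborel {0..1} (\<lambda>t. u t * v t)"
proof (rule set_integrable_bound[where f="\<lambda>t. (u t)\<^sup>2 + (v t)\<^sup>2"])
  show "set_integrable lborel {0..1} (\<lambda>t. (u t)\<^sup>2 + (v t)\<^sup>2)"
    using assms unfolding L2_01_def by (intro set_integral_add) auto
  show "set_borel_measurable lborel {0..1} (\<lambda>t. u t * v t)"
    using L2_meas[OF assms(1)] L2_meas[OF assms(2)] unfolding set_borel_measurable_def by measurable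
  show "AE x in lborel. x \<in> {0..1} \<longrightarrow> norm (u x * v x) \<le> norm ((u x)\<^sup>2 + (v x)\<^sup>2)"
  proof (intro AE_I2 impI)
    fix x 
    have "0 \<le> (\<bar>u x\<bar> - \<bar>v x\<bar>)\<^sup>2" by simp
    then have "2 * (\<bar>u x\<bar> * \<bar>v x\<bar>) \<le> (u x)\<^sup>2 + (v x)\<^sup>2"
      by (simp add: power2_diff)
    moreover have "0 \<le> \<bar>u x\<bar> * \<bar>v x\<bar>" by simp
    ultimately have "\<bar>u x\<bar> * \<bar>v x\<bar> \<le> (u x)\<^sup>2 + (v x)\<^sup>2" by linarith
    then have "\<bar>u x * v x\<bar> \<le> (u x)\<^sup>2 + (v x)\<^sup>2"
      by (simp add: abs_mult)
    then show "norm (u x * v x) \<le> norm ((u x)\<^sup>2 + (v x)\<^sup>2)" by simp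
  qed
qed

lemma L2_add: "L2_01 u \<Longrightarrow> L2_01 v \<Longrightarrow> L2_01 (\<lambda>t. u t + v t)"
  unfolding L2_01_def power2_sum
  by (auto intro!: set_integral_add set_integral_mult_right L2_prod[unfolded L2_01_def] simp: set_integrable_mult_right)


lemma L2_cmult: "L2_01 u \<Longrightarrow> L2_01 (\<lambda>t. c * u t)"
  unfolding L2_01_def power_mult_distrib by (auto intro!: set_integrable_mult_right)

lemma L2_minus: "L2_01 u \<Longrightarrow> L2_01 (\<lambda>t. - u t)"
  using L2_cmult[of u "-1"] by simp

lemma L2_diff: "L2_01 u \<Longrightarrow> L2_01 v \<Longrightarrow> L2_01 (\<lambda>t. u t - v t)"
  using L2_add[OF _ L2_minus, of u v] by simp

lemma L2_indicator: "A \<in> sets borel \<Longrightarrow> L2_01 (indicator A :: real \<Rightarrow> real)"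
  unfolding L2_01_def
proof (intro conjI)
  assume A: "A \<in> sets borel"
  then show "(indicator A :: real \<Rightarrow> real) \<in> borel_measurable lborel" by simp
  show "set_integrable lborel {0..1} (\<lambda>t. (indicator A t :: real)\<^sup>2)"
  proof (rule set_integrable_bound[where f="\<lambda>_. 1::real"])
    show "set_integrable lborel {0..1::real} (\<lambda>_. 1::real)" using set_integrable_const_Icc[of 0 1 1] by simp
    show "set_borel_measurable lborel {0..1} (\<lambda>t. (indicator A t :: real)\<^sup>2)"
      using A unfolding set_borel_measurable_def by measurable
  qed (auto simp: indicator_def)
qed

lemma L2_const: "L2_01 (\<lambda>_. c)"
  unfolding L2_01_def by (simp add: set_integrable_const_Icc)

lemma L2_sq_int: "L2_01 u \<Longrightarrow> set_integrable lborel {0..1} (\<lambda>t. (u t)\<^sup>2)"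
  unfolding L2_01_def by simp

lemma L2_sub_int:
  assumes "L2_01 u" "A \<in> sets borel" "A \<subseteq> {0..1}"
  shows "set_integrable lborel A u" "set_integrable lborel A (\<lambda>t. (u t)\<^sup>2)"
  using set_integrable_subset[OF L2_int[OF assms(1)]] set_integrable_subset[OF L2_sq_int[OF assms(1)]] assms(2,3)
  by auto

lemma L2_sub_prod:
  assumes "L2_01 u" "L2_01 v" "A \<in> sets borel" "A \<subseteq> {0..1}"
  shows "set_integrable lborel A (\<lambda>t. u t * v t)"
  using set_integrable_subset[OF L2_prod[OF assms(1,2)]] assms(3,4) by auto

subsection \<open>Dyadic intervals\<close>

definition iv :: "nat \<Rightarrow> nat \<Rightarrow> real set" where
  "iv n k = {real k / 2^n .. real (Suc k) / 2^n}"

lemma iv_sub: "k < 2^n \<Longrightarrow> iv n k \<subseteq> {0..1}"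
proof -
  assume k: "k < 2^n"
  then have "real (Suc k) \<le> 2^n"
    by (metis Suc_leI of_nat_le_iff of_nat_numeral of_nat_power)
  then show ?thesis unfolding iv_def by (auto simp: field_simps)
qed

lemma iv_sets[measurable]: "iv n k \<in> sets borel"
  unfolding iv_def by simp

lemma split_Icc_integral:
  fixes a b c :: real and w :: "real \<Rightarrow> real"
  assumes "a \<le> b" "b \<le> c" "set_integrable lborel {a..c} w"
  shows "(LBINT x:{a..c}. w x) = (LBINT x:{a..b}. w x) + (LBINT x:{b..c}. w x)"
proof -
  have "{a..c} = {a..b} \<union> {b..c}" using assms by auto
  moreover have "(LBINT x:{a..b} \<union> {b..c}. w x) = (LBINT x:{a..b}. w x) + (LBINT x:{b..c}. w x)"
  proof (rule set_integral_Un_AE)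
    show "AE x in lborel. \<not> (x \<in> {a..b} \<and> x \<in> {b..c})"
      using AE_lborel_singleton[of b] by eventually_elim auto
    show "set_integrable lborel {a..b} w" "set_integrable lborel {b..c} w"
      using assms by (auto intro: set_integrable_subset)
  qed auto
  ultimately show ?thesis by simp
qed

lemma dyadic_additive_aux:
  fixes w :: "real \<Rightarrow> real"
  assumes "set_integrable lborel {0..1} w" "j \<le> 2^n"
  shows "(LBINT x:{0..real j / 2^n}. w x) = (\<Sum>k<j. LBINT x:iv n k. w x)"
  using assms(2)
proof (induction j)
  case 0
  have "(LBINT x:{0}. w x) = 0"
    unfolding set_lebesgue_integral_def
    by (rule integral_eq_zero_AE) (use AE_lborel_singleton[of 0] in \<open>auto elim!: eventually_mono\<close>)
  then show ?case by simp
next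
  case (Suc j)
  have j1: "real (Suc j) \<le> 2^n"
    by (metis Suc.prems of_nat_le_iff of_nat_numeral of_nat_power)
  have le: "real j / 2^n \<le> real (Suc j) / 2^n" by (simp add: divide_right_mono)
  have "(LBINT x:{0..real (Suc j) / 2^n}. w x) = (LBINT x:{0..real j / 2^n}. w x) + (LBINT x:iv n j. w x)"
    unfolding iv_def
  proof (rule split_Icc_integral)
    show "set_integrable lborel {0..real (Suc j) / 2 ^ n} w"
      using j1 by (intro set_integrable_subset[OF assms(1)]) (auto simp: field_simps)
  qed (use le in auto)
  then show ?case using Suc by simp
qed

lemma dyadic_additive:
  fixes w :: "real \<Rightarrow> real"
  assumes "set_integrable lborel {0..1} w"
  shows "(LBINT x:{0..1}. w x) = (\<Sum>k<2^n. LBINT x:iv n k. w x)"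
  using dyadic_additive_aux[OF assms, of "2^n" n] by simp

definition SI :: "nat \<Rightarrow> (real \<Rightarrow> real) \<Rightarrow> nat \<Rightarrow> real" where
  "SI n u k = (LBINT s:iv n k. u s)"

definition Tk :: "nat \<Rightarrow> (real \<Rightarrow> real) \<Rightarrow> nat \<Rightarrow> real" where
  "Tk n u k = (LBINT s:iv n k. (u s)\<^sup>2) - 2^n * (SI n u k)\<^sup>2"

definition Bn :: "nat \<Rightarrow> (real \<Rightarrow> real) \<Rightarrow> (real \<Rightarrow> real) \<Rightarrow> real" where
  "Bn n u v = 2^n * (\<Sum>k<2^n. SI n u k * SI n v k)"

definition Gn :: "nat \<Rightarrow> (real \<Rightarrow> real) \<Rightarrow> (real \<Rightarrow> real) \<Rightarrow> real" where
  "Gn n u v = (LBINT s:{0..1}. u s * v s) - Bn n u v"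

lemma iv_len: "(LBINT s:iv n k. (c::real)) = c / (2::real)^n"
  unfolding iv_def by (subst set_integral_const_Icc) (auto simp: divide_right_mono field_simps)

lemma set_int_nonneg:
  fixes f :: "'a \<Rightarrow> real"
  shows "(\<And>x. x \<in> A \<Longrightarrow> 0 \<le> f x) \<Longrightarrow> 0 \<le> (LINT x:A|M. f x)"
  unfolding set_lebesgue_integral_def by (auto intro!: integral_nonneg simp: indicator_def)

lemma Tk_nonneg:
  assumes "L2_01 u" "k < 2^n"
  shows "0 \<le> Tk n u k"
proof -
  define c where "c = 2^n * SI n u k"
  have i1: "set_integrable lborel (iv n k) u" and i2: "set_integrable lborel (iv n k) (\<lambda>t. (u t)\<^sup>2)"
    using L2_sub_int[OF assms(1) iv_sets iv_sub[OF assms(2)]] by auto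
  have "0 \<le> (LBINT s:iv n k. (u s - c)\<^sup>2)"
    by (rule set_int_nonneg) auto
  also have "(LBINT s:iv n k. (u s - c)\<^sup>2) = (LBINT s:iv n k. ((u s)\<^sup>2 - (2 * c) * u s) + c\<^sup>2)"
    by (rule set_lebesgue_integral_cong) (auto simp: power2_diff)
  also have "\<dots> = (LBINT s:iv n k. ((u s)\<^sup>2 - (2 * c) * u s)) + (LBINT s:iv n k. c\<^sup>2)"
    using i1 i2 by (intro set_integral_add set_integral_diff set_integrable_mult_right)
       (auto simp: iv_def set_integrable_const_Icc)
  also have "(LBINT s:iv n k. ((u s)\<^sup>2 - (2 * c) * u s)) = (LBINT s:iv n k. (u s)\<^sup>2) - (LBINT s:iv n k. (2 * c) * u s)"
    using i1 i2 by (intro set_integral_diff set_integrable_mult_right) auto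
  also have "(LBINT s:iv n k. (2 * c) * u s) = (2 * c) * SI n u k"
    unfolding SI_def by (rule set_integral_mult_right)
  also have "(LBINT s:iv n k. c\<^sup>2) = c\<^sup>2 / 2^n" by (rule iv_len)
  finally have X: "0 \<le> (LBINT s:iv n k. (u s)\<^sup>2) - (2 * c) * SI n u k + c\<^sup>2 / 2^n" .
  have eq: "\<And>A S. (A - 2 * (2^n*S) * S) + (2^n*S)\<^sup>2/2^n = A - 2^n * (S::real)\<^sup>2"
    by (simp add: power2_eq_square field_simps)
  show ?thesis using X unfolding Tk_def c_def eq .
qed

lemma Tk_le:
  assumes "L2_01 u" "k < 2^n"
  shows "Tk n u k \<le> (LBINT s:iv n k. (u s)\<^sup>2)"
  unfolding Tk_def by simp

lemma Qn_sum:
  assumes "L2_01 u"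
  shows "Gn n u u = (\<Sum>k<2^n. Tk n u k)"
  unfolding Gn_def Bn_def Tk_def
  using dyadic_additive[OF L2_sq_int[OF assms], of n]
  by (simp add: sum_subtractf sum_distrib_left power2_eq_square)

lemma Qn_nonneg: "L2_01 u \<Longrightarrow> 0 \<le> Gn n u u"
  unfolding Qn_sum by (intro sum_nonneg Tk_nonneg) auto

lemma Qn_le: "L2_01 u \<Longrightarrow> Gn n u u \<le> (LBINT s:{0..1}. (u s)\<^sup>2)"
  unfolding Gn_def by (simp add: Bn_def sum_nonneg power2_eq_square)


lemma SI_add: "L2_01 u \<Longrightarrow> L2_01 v \<Longrightarrow> k < 2^n \<Longrightarrow> SI n (\<lambda>s. u s + v s) k = SI n u k + SI n v k"
  unfolding SI_def by (intro set_integral_add L2_sub_int[OF _ iv_sets iv_sub]) auto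

lemma SI_cmult: "SI n (\<lambda>s. c * u s) k = c * SI n u k"
  unfolding SI_def by (rule set_integral_mult_right)

lemma Gn_sym: "Gn n u v = Gn n v u"
  unfolding Gn_def Bn_def by (simp add: mult.commute)

lemma Gn_add:
  assumes "L2_01 u" "L2_01 v" "L2_01 w"
  shows "Gn n (\<lambda>s. u s + v s) w = Gn n u w + Gn n v w"
proof -
  have "(LBINT s:{0..1}. (u s + v s) * w s) = (LBINT s:{0..1}. u s * w s + v s * w s)"
    by (simp add: distrib_right)
  also have "\<dots> = (LBINT s:{0..1}. u s * w s) + (LBINT s:{0..1}. v s * w s)"
    using assms by (intro set_integral_add L2_prod) auto
  finally have 1: "(LBINT s:{0..1}. (u s + v s) * w s) = (LBINT s:{0..1}. u s * w s) + (LBINT s:{0..1}. v s * w s)" .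
  have 2: "Bn n (\<lambda>s. u s + v s) w = Bn n u w + Bn n v w"
    unfolding Bn_def by (simp add: SI_add assms distrib_right sum.distrib distrib_left)
  show ?thesis unfolding Gn_def 1 2 by simp
qed

lemma Gn_cmult:
  shows "Gn n (\<lambda>s. c * u s) w = c * Gn n u w"
proof -
  have 1: "(LBINT s:{0..1}. (c * u s) * w s) = c * (LBINT s:{0..1}. u s * w s)"
    by (simp add: set_integral_mult_right mult.assoc)
  have 2: "Bn n (\<lambda>s. c * u s) w = c * Bn n u w"
    unfolding Bn_def by (simp add: SI_cmult sum_distrib_left mult_ac)
  show ?thesis unfolding Gn_def 1 2 by (simp add: right_diff_distrib)
qed

lemma Gn_cong:
  assumes "\<And>x. x \<in> {0..1} \<Longrightarrow> u x = u' x"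
  shows "Gn n u w = Gn n u' w"
proof -
  have 1: "(LBINT s:{0..1}. u s * w s) = (LBINT s:{0..1}. u' s * w s)"
    using assms by (intro set_lebesgue_integral_cong) auto
  have "SI n u k = SI n u' k" if "k < 2^n" for k
    unfolding SI_def using assms iv_sub[OF that] by (intro set_lebesgue_integral_cong) auto
  then have 2: "Bn n u w = Bn n u' w" unfolding Bn_def by (intro arg_cong2[where f="(*)"] sum.cong) auto
  show ?thesis unfolding Gn_def 1 2 ..
qed

lemma Gn_minus: "Gn n (\<lambda>s. - u s) w = - Gn n u w"
  using Gn_cmult[of n "-1" u w] by simp

lemma Gn_diff:
  assumes "L2_01 u" "L2_01 v" "L2_01 w"
  shows "Gn n (\<lambda>s. u s - v s) w = Gn n u w - Gn n v w"
  using Gn_add[OF assms(1) L2_minus[OF assms(2)] assms(3), of n] Gn_minus[of n v w] by simp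

lemma Q_plus:
  assumes "L2_01 u" "L2_01 v"
  shows "Gn n (\<lambda>s. u s + v s) (\<lambda>s. u s + v s) = Gn n u u + 2 * Gn n u v + Gn n v v"
proof -
  have "Gn n (\<lambda>s. u s + v s) (\<lambda>s. u s + v s) = Gn n u (\<lambda>s. u s + v s) + Gn n v (\<lambda>s. u s + v s)"
    using assms by (simp add: Gn_add L2_add)
  also have "Gn n u (\<lambda>s. u s + v s) = Gn n u u + Gn n u v"
    using assms Gn_add[OF assms, of u n] Gn_sym by (metis)
  also have "Gn n v (\<lambda>s. u s + v s) = Gn n u v + Gn n v v"
    using assms Gn_add[OF assms, of v n] Gn_sym by (metis)
  finally show ?thesis by simp
qed

lemma Q_minus:
  assumes "L2_01 u" "L2_01 v"
  shows "Gn n (\<lambda>s. u s - v s) (\<lambda>s. u s - v s) = Gn n u u - 2 * Gn n u v + Gn n v v"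
proof -
  have "Gn n (\<lambda>s. u s - v s) (\<lambda>s. u s - v s) = Gn n u (\<lambda>s. u s - v s) - Gn n v (\<lambda>s. u s - v s)"
    using assms by (simp add: Gn_diff L2_diff)
  also have "Gn n u (\<lambda>s. u s - v s) = Gn n u u - Gn n u v"
    using assms Gn_diff[OF assms, of u n] Gn_sym by (metis)
  also have "Gn n v (\<lambda>s. u s - v s) = Gn n u v - Gn n v v"
    using assms Gn_diff[OF assms, of v n] Gn_sym by (metis)
  finally show ?thesis by simp
qed

lemma Q_add_le:
  assumes "L2_01 u" "L2_01 v"
  shows "Gn n (\<lambda>s. u s + v s) (\<lambda>s. u s + v s) \<le> 2 * Gn n u u + 2 * Gn n v v"
  using Q_plus[OF assms, of n] Q_minus[OF assms, of n] Qn_nonneg[OF L2_diff[OF assms], of n] by simp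

lemma Q_diff_le:
  assumes "L2_01 u" "L2_01 v"
  shows "Gn n (\<lambda>s. u s - v s) (\<lambda>s. u s - v s) \<le> 2 * Gn n u u + 2 * Gn n v v"
  using Q_plus[OF assms, of n] Q_minus[OF assms, of n] Qn_nonneg[OF L2_add[OF assms], of n] by simp

lemma Q_cmult: "Gn n (\<lambda>s. c * u s) (\<lambda>s. c * u s) = c\<^sup>2 * Gn n u u"
  using Gn_cmult[of n c u "\<lambda>s. c * u s"] Gn_sym[of n u "\<lambda>s. c * u s"] Gn_cmult[of n c u u]
  by (simp add: power2_eq_square)

lemma G_polar:
  assumes "L2_01 u" "L2_01 v"
  shows "Gn n u v = (Gn n (\<lambda>s. u s + v s) (\<lambda>s. u s + v s) - Gn n (\<lambda>s. u s - v s) (\<lambda>s. u s - v s)) / 4"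
  using Q_plus[OF assms, of n] Q_minus[OF assms, of n] by simp


lemma Tk_const:
  assumes "\<And>x. x \<in> iv n k \<Longrightarrow> u x = c"
  shows "Tk n u k = 0"
proof -
  have 1: "SI n u k = c / 2^n"
  proof -
    have "(LBINT s:iv n k. u s) = (LBINT s:iv n k. c)"
      by (rule set_lebesgue_integral_cong) (auto simp: assms)
    then show ?thesis unfolding SI_def by (simp add: iv_len)
  qed
  have 2: "(LBINT s:iv n k. (u s)\<^sup>2) = c\<^sup>2 / 2^n"
  proof -
    have "(LBINT s:iv n k. (u s)\<^sup>2) = (LBINT s:iv n k. c\<^sup>2)"
      by (rule set_lebesgue_integral_cong) (auto simp: assms)
    then show ?thesis by (simp add: iv_len)
  qed
  show ?thesis unfolding Tk_def 1 2 by (simp add: power2_eq_square field_simps)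
qed

lemma Q_const: "Gn n (\<lambda>_. c) (\<lambda>_. c) = 0"
  using Qn_sum[OF L2_const, of n c] Tk_const[of n _ "\<lambda>_. c" c] by simp

lemma Q_atMost:
  fixes a :: real
  shows "Gn n (indicator {..a}) (indicator {..a}) \<le> 1 / 2^n"
proof -
  let ?u = "indicator {..a} :: real \<Rightarrow> real"
  have L: "L2_01 ?u" by (rule L2_indicator) simp
  define P where "P k \<longleftrightarrow> real k / 2^n \<le> a \<and> a < real (Suc k) / 2^n" for k
  have T: "Tk n ?u k \<le> (if P k then 1 / 2^n else 0)" if k: "k < 2^n" for k
  proof (cases "real (Suc k) / 2^n \<le> a")
    case True
    then have "Tk n ?u k = 0" by (intro Tk_const[where c=1]) (auto simp: iv_def)
    then show ?thesis using True by (simp add: P_def)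
  next
    case False
    show ?thesis
    proof (cases "a < real k / 2^n")
      case True
      then have "Tk n ?u k = 0" by (intro Tk_const[where c=0]) (auto simp: iv_def)
      then show ?thesis using True by (simp add: P_def)
    next
      case False2: False
      then have Pk: "P k" using False by (simp add: P_def)
      have I1: "set_integrable lborel (iv n k) (\<lambda>s. (?u s)\<^sup>2)"
        using L2_sub_int[OF L iv_sets iv_sub[OF k]] by simp
      have I2: "set_integrable lborel (iv n k) (\<lambda>s. 1::real)"
        unfolding iv_def by (rule set_integrable_const_Icc)
      have "Tk n ?u k \<le> (LBINT s:iv n k. (?u s)\<^sup>2)" by (rule Tk_le[OF L k])
      also have "(LBINT s:iv n k. (?u s)\<^sup>2) \<le> (LBINT s:iv n k. 1)"
        by (rule set_integral_mono[OF I1 I2]) (auto simp: indicator_def)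
      also have "\<dots> = 1 / 2^n" by (simp add: iv_len)
      finally show ?thesis using Pk by simp
    qed
  qed
  have "Gn n ?u ?u = (\<Sum>k<2^n. Tk n ?u k)" by (rule Qn_sum[OF L])
  also have "\<dots> \<le> (\<Sum>k<2^n. (if P k then 1 / 2^n else 0))"
    by (rule sum_mono) (use T in auto)
  also have "\<dots> = real (card {k\<in>{..<2^n}. P k}) * (1 / 2^n)"
    by (simp add: sum.If_cases Int_def conj_commute)
  also have "\<dots> \<le> 1 * (1 / 2^n)"
  proof (rule mult_right_mono)
    have "card {k\<in>{..<2^n}. P k} \<le> Suc 0"
    proof (subst card_le_Suc0_iff_eq, simp, intro ballI)
      fix k1 k2 assume "k1 \<in> {k\<in>{..<2^n}. P k}" "k2 \<in> {k\<in>{..<2^n}. P k}"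
      then have p1: "P k1" and p2: "P k2" by auto
      have "\<not> k1 < k2" if "P k1" "P k2" for k1 k2
      proof
        assume "k1 < k2"
        then have "real (Suc k1) \<le> real k2" by simp
        then have "real (Suc k1) / 2^n \<le> real k2 / 2^n" by (simp add: divide_right_mono)
        then show False using that unfolding P_def by linarith
      qed
      then show "k1 = k2" using p1 p2 by (meson linorder_neqE_nat)
    qed
    then show "real (card {k\<in>{..<2^n}. P k}) \<le> 1" by simp
  qed simp
  finally show ?thesis by simp
qed

definition Qc :: "(real \<Rightarrow> real) \<Rightarrow> bool" where
  "Qc u \<longleftrightarrow> (\<lambda>n. Gn n u u) \<longlonglongrightarrow> 0"

lemma Qc_add:
  assumes "L2_01 u" "L2_01 v" "Qc u" "Qc v"
  shows "Qc (\<lambda>s. u s + v s)"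
  unfolding Qc_def
proof (rule tendsto_sandwich[where f="\<lambda>_. 0" and h="\<lambda>n. 2 * Gn n u u + 2 * Gn n v v"])
  show "\<forall>\<^sub>F n in sequentially. 0 \<le> Gn n (\<lambda>s. u s + v s) (\<lambda>s. u s + v s)"
    using Qn_nonneg[OF L2_add[OF assms(1,2)]] by simp
  show "\<forall>\<^sub>F n in sequentially. Gn n (\<lambda>s. u s + v s) (\<lambda>s. u s + v s) \<le> 2 * Gn n u u + 2 * Gn n v v"
    using Q_add_le[OF assms(1,2)] by simp
  show "(\<lambda>n. 2 * Gn n u u + 2 * Gn n v v) \<longlonglongrightarrow> 0"
    using tendsto_add[OF tendsto_mult[OF tendsto_const assms(3)[unfolded Qc_def]] tendsto_mult[OF tendsto_const assms(4)[unfolded Qc_def]], of 2 2] by simp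
qed simp

lemma Qc_diff:
  assumes "L2_01 u" "L2_01 v" "Qc u" "Qc v"
  shows "Qc (\<lambda>s. u s - v s)"
  unfolding Qc_def
proof (rule tendsto_sandwich[where f="\<lambda>_. 0" and h="\<lambda>n. 2 * Gn n u u + 2 * Gn n v v"])
  show "\<forall>\<^sub>F n in sequentially. 0 \<le> Gn n (\<lambda>s. u s - v s) (\<lambda>s. u s - v s)"
    using Qn_nonneg[OF L2_diff[OF assms(1,2)]] by simp
  show "\<forall>\<^sub>F n in sequentially. Gn n (\<lambda>s. u s - v s) (\<lambda>s. u s - v s) \<le> 2 * Gn n u u + 2 * Gn n v v"
    using Q_diff_le[OF assms(1,2)] by simp
  show "(\<lambda>n. 2 * Gn n u u + 2 * Gn n v v) \<longlonglongrightarrow> 0"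
    using tendsto_add[OF tendsto_mult[OF tendsto_const assms(3)[unfolded Qc_def]] tendsto_mult[OF tendsto_const assms(4)[unfolded Qc_def]], of 2 2] by simp
qed simp

lemma Qc_cmult: "Qc u \<Longrightarrow> Qc (\<lambda>s. c * u s)"
  unfolding Qc_def Q_cmult by (auto intro: tendsto_eq_intros)

lemma Qc_approx:
  assumes u: "L2_01 u" and v: "\<And>m. L2_01 (v m)" "\<And>m. Qc (v m)"
    and lim: "(\<lambda>m. LBINT s:{0..1}. (u s - v m s)\<^sup>2) \<longlonglongrightarrow> 0"
  shows "Qc u"
  unfolding Qc_def
proof (rule LIMSEQ_I)
  fix r :: real assume r: "0 < r"
  from LIMSEQ_D[OF lim, of "r/8"] r obtain m where m: "\<bar>LBINT s:{0..1}. (u s - v m s)\<^sup>2\<bar> < r/8"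
    by auto
  from LIMSEQ_D[OF v(2)[of m, unfolded Qc_def], of "r/8"] r obtain N where
    N: "\<And>n. n \<ge> N \<Longrightarrow> norm (Gn n (v m) (v m) - 0) < r/8" by auto
  have "norm (Gn n u u - 0) < r" if "n \<ge> N" for n
  proof -
    have Ld: "L2_01 (\<lambda>s. u s - v m s)" using L2_diff[OF u v(1)] .
    have "Gn n u u = Gn n (\<lambda>s. v m s + (u s - v m s)) (\<lambda>s. v m s + (u s - v m s))" by simp
    also have "\<dots> \<le> 2 * Gn n (v m) (v m) + 2 * Gn n (\<lambda>s. u s - v m s) (\<lambda>s. u s - v m s)"
      by (rule Q_add_le[OF v(1) Ld])
    also have "Gn n (\<lambda>s. u s - v m s) (\<lambda>s. u s - v m s) \<le> (LBINT s:{0..1}. (u s - v m s)\<^sup>2)"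
      by (rule Qn_le[OF Ld])
    finally have "Gn n u u \<le> 2 * Gn n (v m) (v m) + 2 * (LBINT s:{0..1}. (u s - v m s)\<^sup>2)" by simp
    moreover have "0 \<le> Gn n u u" by (rule Qn_nonneg[OF u])
    ultimately show ?thesis using N[OF that] m by simp
  qed
  then show "\<exists>N. \<forall>n\<ge>N. norm (Gn n u u - 0) < r" by blast
qed


lemma Qc_const: "Qc (\<lambda>_. c)"
  unfolding Qc_def Q_const by simp

lemma Qc_atMost: "Qc (indicator {..a::real})"
  unfolding Qc_def
proof (rule tendsto_sandwich[where f="\<lambda>_. 0" and h="\<lambda>n. 1 / 2^n"])
  show "\<forall>\<^sub>F n in sequentially. 0 \<le> Gn n (indicator {..a}) (indicator {..a})"
    using Qn_nonneg[OF L2_indicator[of "{..a}"]] by simp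
  show "\<forall>\<^sub>F n in sequentially. Gn n (indicator {..a}) (indicator {..a}) \<le> 1 / 2^n"
    using Q_atMost by simp
  show "(\<lambda>n. 1 / 2 ^ n :: real) \<longlonglongrightarrow> 0"
    using LIMSEQ_inverse_realpow_zero[of "2::real"] by (simp add: inverse_eq_divide)
qed simp

lemma sets_borel_atMost: "sets (borel :: real measure) = sigma_sets UNIV (range (\<lambda>a::real. {..a}))"
  by (subst borel_eq_atMost) (simp add: sets_measure_of)

lemma Qc_borel:
  assumes "A \<in> sets (borel :: real measure)"
  shows "Qc (indicator A :: real \<Rightarrow> real)"
proof -
  have st: "Int_stable (range (\<lambda>a::real. {..a}))"
    by (auto simp: Int_stable_def intro!: exI[of _ "min _ _"])
  have A: "A \<in> sigma_sets UNIV (range (\<lambda>a::real. {..a}))" using assms sets_borel_atMost by simp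
  show ?thesis
  proof (rule sigma_sets_induct_disjoint[OF st _ A, where P="\<lambda>A. Qc (indicator A :: real \<Rightarrow> real)"])
    show "range atMost \<subseteq> Pow UNIV" by simp
  next
    fix B assume "B \<in> range (\<lambda>a::real. {..a})"
    then show "Qc (indicator B :: real \<Rightarrow> real)" using Qc_atMost by auto
  next
    have "indicator {} = (\<lambda>_::real. 0::real)" by (auto simp: indicator_def)
    then show "Qc (indicator {} :: real \<Rightarrow> real)" using Qc_const[of 0] by simp
  next
    fix B assume B: "B \<in> sigma_sets UNIV (range (\<lambda>a::real. {..a}))" and QB: "Qc (indicator B :: real \<Rightarrow> real)"
    have Bb: "B \<in> sets borel" using B sets_borel_atMost by simp
    have "Qc (\<lambda>s. 1 - indicator B s :: real)"
      by (rule Qc_diff[OF L2_const L2_indicator[OF Bb] Qc_const QB])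
    moreover have "(\<lambda>s. 1 - indicator B s :: real) = indicator (UNIV - B)"
      by (auto simp: indicator_def)
    ultimately show "Qc (indicator (UNIV - B) :: real \<Rightarrow> real)" by simp
  next
    fix F :: "nat \<Rightarrow> real set"
    assume dj: "disjoint_family F" and rng: "range F \<subseteq> sigma_sets UNIV (range (\<lambda>a::real. {..a}))"
      and QF: "\<And>i. Qc (indicator (F i) :: real \<Rightarrow> real)"
    have Fb: "F i \<in> sets borel" for i
    proof -
      have "F i \<in> sigma_sets UNIV (range (\<lambda>a::real. {..a}))" using rng by blast
      then show ?thesis by (simp add: sets_borel_atMost)
    qed
    define V where "V m = (\<Union>i<m. F i)" for m
    have Vb: "V m \<in> sets borel" for m unfolding V_def by (intro sets.finite_UN Fb) auto
    have QV: "Qc (indicator (V m) :: real \<Rightarrow> real)" for m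
    proof (induction m)
      case 0
      have "indicator {} = (\<lambda>_::real. 0::real)" by (auto simp: indicator_def)
      then show ?case using Qc_const[of 0] by (simp add: V_def)
    next
      case (Suc m)
      have "indicator (V (Suc m)) = (\<lambda>s. indicator (V m) s + indicator (F m) s :: real)"
      proof
        fix s
        have "s \<notin> V m \<or> s \<notin> F m"
        proof (rule ccontr)
          assume "\<not> (s \<notin> V m \<or> s \<notin> F m)"
          then obtain i where i: "i < m" "s \<in> F i" "s \<in> F m" unfolding V_def by auto
          then have "F i \<inter> F m = {}" using dj unfolding disjoint_family_on_def by simp
          then show False using i by auto
        qed
        then show "indicator (V (Suc m)) s = (indicator (V m) s + indicator (F m) s :: real)"
          unfolding V_def by (auto simp: indicator_def lessThan_Suc)
      qed
      then show ?case using Qc_add[OF L2_indicator[OF Vb] L2_indicator[OF Fb] Suc QF] by simp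
    qed
    let ?U = "\<Union> (range F)"
    have Ub: "?U \<in> sets borel" using Fb by (intro sets.countable_UN) (auto simp: image_subset_iff)
    show "Qc (indicator ?U :: real \<Rightarrow> real)"
    proof (rule Qc_approx[OF L2_indicator[OF Ub] L2_indicator[OF Vb] QV])
      have "(\<lambda>m. integral\<^sup>L lborel (\<lambda>x. indicator {0..1} x *\<^sub>R (indicator ?U x - indicator (V m) x :: real)\<^sup>2))
              \<longlonglongrightarrow> integral\<^sup>L lborel (\<lambda>x::real. 0 :: real)"
      proof (rule Bochner_Integration.integral_dominated_convergence[where w="indicator {0..1::real}" and M=lborel and f="\<lambda>x. 0::real"
             and s="\<lambda>m x. indicator {0..1} x *\<^sub>R (indicator ?U x - indicator (V m) x :: real)\<^sup>2"])
        show "(\<lambda>x::real. 0::real) \<in> borel_measurable lborel" by simp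
        show "(\<lambda>x. indicator {0..1} x *\<^sub>R (indicator ?U x - indicator (V m) x :: real)\<^sup>2) \<in> borel_measurable lborel" for m
          using Ub Vb by measurable
        show "integrable lborel (indicator {0..1::real} :: real \<Rightarrow> real)"
          by (simp add: integrable_real_indicator emeasure_lborel_Icc_eq)
        show "AE x in lborel. norm (indicator {0..1} x *\<^sub>R (indicator ?U x - indicator (V m) x :: real)\<^sup>2) \<le> indicator {0..1} x" for m
          by (intro AE_I2) (auto simp: indicator_def)
        show "AE x in lborel. (\<lambda>m. indicator {0..1} x *\<^sub>R (indicator ?U x - indicator (V m) x :: real)\<^sup>2) \<longlonglongrightarrow> 0"
        proof (intro AE_I2)
          fix x
          show "(\<lambda>m. indicator {0..1} x *\<^sub>R (indicator ?U x - indicator (V m) x :: real)\<^sup>2) \<longlonglongrightarrow> 0"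
          proof (cases "x \<in> ?U")
            case True
            then obtain j where j: "x \<in> F j" by auto
            have "eventually (\<lambda>m. indicator {0..1} x *\<^sub>R (indicator ?U x - indicator (V m) x :: real)\<^sup>2 = 0) sequentially"
            proof (rule eventually_sequentiallyI[of "Suc j"])
              fix m assume "Suc j \<le> m"
              then have "x \<in> V m" using j unfolding V_def by auto
              then show "indicator {0..1} x *\<^sub>R (indicator ?U x - indicator (V m) x :: real)\<^sup>2 = 0"
                using True by simp
            qed
            then show ?thesis by (rule tendsto_eventually)
          next
            case False
            then have "x \<notin> V m" for m unfolding V_def by auto
            then show ?thesis using False by simp
          qed
        qed
      qed
      then show "(\<lambda>m. LBINT s:{0..1}. (indicator ?U s - indicator (V m) s :: real)\<^sup>2) \<longlonglongrightarrow> 0"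
        by (simp add: set_lebesgue_integral_def)
    qed
  qed
qed


lemma L2_01_I:
  assumes "u \<in> borel_measurable lborel" "set_integrable lborel {0..1} (\<lambda>t. (u t)\<^sup>2)"
  shows "L2_01 u"
  using assms unfolding L2_01_def by simp

lemma sq_bound_int:
  fixes u w :: "real \<Rightarrow> real"
  assumes "set_integrable lborel {0..1} (\<lambda>t. (w t)\<^sup>2)" "u \<in> borel_measurable lborel"
    and "\<And>t. \<bar>u t\<bar> \<le> \<bar>w t\<bar>"
  shows "set_integrable lborel {0..1} (\<lambda>t. (u t)\<^sup>2)"
proof (rule set_integrable_bound[OF assms(1)])
  show "set_borel_measurable lborel {0..1} (\<lambda>t. (u t)\<^sup>2)"
    using assms(2) unfolding set_borel_measurable_def by measurable
  show "AE x in lborel. x \<in> {0..1} \<longrightarrow> norm ((u x)\<^sup>2) \<le> norm ((w x)\<^sup>2)"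
  proof (intro AE_I2 impI)
    fix x
    have "\<bar>u x\<bar>\<^sup>2 \<le> \<bar>w x\<bar>\<^sup>2" by (rule power_mono[OF assms(3)]) simp
    then show "norm ((u x)\<^sup>2) \<le> norm ((w x)\<^sup>2)" by simp
  qed
qed

lemma Qc_nonneg:
  assumes um: "u \<in> borel_measurable lborel" and nn: "\<And>x. 0 \<le> u x"
    and sq: "set_integrable lborel {0..1} (\<lambda>t. (u t)\<^sup>2)"
  shows "Qc u"
proof -
  have "set_integrable lborel {0..1} (\<lambda>t. (u t)\<^sup>2) \<longrightarrow> Qc u"
    using um nn
  proof (rule borel_measurable_induct_real[where P="\<lambda>u. set_integrable lborel {0..1} (\<lambda>t. (u t)\<^sup>2) \<longrightarrow> Qc u"])
    fix A :: "real set" assume "A \<in> sets lborel"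
    then show "set_integrable lborel {0..1} (\<lambda>t. (indicator A t :: real)\<^sup>2) \<longrightarrow> Qc (indicator A)"
      using Qc_borel by simp
  next
    fix u :: "real \<Rightarrow> real" and c :: real
    assume c: "0 \<le> c" and um: "u \<in> borel_measurable lborel" and "\<And>x. 0 \<le> u x"
      and IH: "set_integrable lborel {0..1} (\<lambda>t. (u t)\<^sup>2) \<longrightarrow> Qc u"
    show "set_integrable lborel {0..1} (\<lambda>t. (c * u t)\<^sup>2) \<longrightarrow> Qc (\<lambda>x. c * u x)"
    proof
      assume sq: "set_integrable lborel {0..1} (\<lambda>t. (c * u t)\<^sup>2)"
      show "Qc (\<lambda>x. c * u x)"
      proof (cases "c = 0")
        case True then show ?thesis using Qc_const[of 0] by simp
      next
        case False
        have "set_integrable lborel {0..1} (\<lambda>t. (1 / c\<^sup>2) * (c * u t)\<^sup>2)"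
          using sq by (rule set_integrable_mult_right)
        moreover have "(\<lambda>t. (1 / c\<^sup>2) * (c * u t)\<^sup>2) = (\<lambda>t. (u t)\<^sup>2)"
          using False by (simp add: power_mult_distrib)
        ultimately have "Qc u" using IH by simp
        then show ?thesis by (rule Qc_cmult)
      qed
    qed
  next
    fix u v :: "real \<Rightarrow> real"
    assume um: "u \<in> borel_measurable lborel" and un: "\<And>x. 0 \<le> u x"
      and IHu: "set_integrable lborel {0..1} (\<lambda>t. (u t)\<^sup>2) \<longrightarrow> Qc u"
      and vm: "v \<in> borel_measurable lborel" and vn: "\<And>x. 0 \<le> v x"
      and IHv: "set_integrable lborel {0..1} (\<lambda>t. (v t)\<^sup>2) \<longrightarrow> Qc v"
    show "set_integrable lborel {0..1} (\<lambda>t. (v t + u t)\<^sup>2) \<longrightarrow> Qc (\<lambda>x. v x + u x)"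
    proof
      assume sq: "set_integrable lborel {0..1} (\<lambda>t. (v t + u t)\<^sup>2)"
      have su: "set_integrable lborel {0..1} (\<lambda>t. (u t)\<^sup>2)"
        by (rule sq_bound_int[OF sq um]) (use un vn in auto)
      have sv: "set_integrable lborel {0..1} (\<lambda>t. (v t)\<^sup>2)"
        by (rule sq_bound_int[OF sq vm]) (use un vn in auto)
      show "Qc (\<lambda>x. v x + u x)"
        by (rule Qc_add[OF L2_01_I[OF vm sv] L2_01_I[OF um su]]) (use IHu IHv su sv in auto)
    qed
  next
    fix U :: "nat \<Rightarrow> real \<Rightarrow> real"
    assume Um: "\<And>i. U i \<in> borel_measurable lborel" and Un: "\<And>i x. 0 \<le> U i x"
      and IH: "\<And>i. set_integrable lborel {0..1} (\<lambda>t. (U i t)\<^sup>2) \<longrightarrow> Qc (U i)"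
      and inc: "incseq U" and lim: "\<And>x. x \<in> space lborel \<Longrightarrow> (\<lambda>i. U i x) \<longlonglongrightarrow> u x"
    show "set_integrable lborel {0..1} (\<lambda>t. (u t)\<^sup>2) \<longrightarrow> Qc u"
    proof
      assume sq: "set_integrable lborel {0..1} (\<lambda>t. (u t)\<^sup>2)"
      have le: "U i x \<le> u x" for i x
      proof (rule incseq_le)
        show "incseq (\<lambda>i. U i x)" using inc by (auto simp: incseq_def le_fun_def)
        show "(\<lambda>i. U i x) \<longlonglongrightarrow> u x" using lim by simp
      qed
      have sU: "set_integrable lborel {0..1} (\<lambda>t. (U i t)\<^sup>2)" for i
      proof (rule sq_bound_int[OF sq Um])
        fix t
        have "\<bar>U i t\<bar> = U i t" using Un[of i t] by simp
        also have "\<dots> \<le> u t" by (rule le)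
        also have "\<dots> \<le> \<bar>u t\<bar>" by simp
        finally show "\<bar>U i t\<bar> \<le> \<bar>u t\<bar>" .
      qed
      have QU: "Qc (U i)" for i using IH sU by simp
      have LU: "L2_01 (U i)" for i by (rule L2_01_I[OF Um sU])
      have Lu: "L2_01 u" by (rule L2_01_I[OF um sq])
      show "Qc u"
      proof (rule Qc_approx[OF Lu LU QU])
        have "(\<lambda>m. integral\<^sup>L lborel (\<lambda>x. indicator {0..1} x *\<^sub>R (u x - U m x)\<^sup>2))
              \<longlonglongrightarrow> integral\<^sup>L lborel (\<lambda>x::real. 0 :: real)"
        proof (rule Bochner_Integration.integral_dominated_convergence[where w="\<lambda>x. indicator {0..1::real} x *\<^sub>R (u x)\<^sup>2"])
          show "(\<lambda>x::real. 0::real) \<in> borel_measurable lborel" by simp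
          show "(\<lambda>x. indicator {0..1} x *\<^sub>R (u x - U m x)\<^sup>2) \<in> borel_measurable lborel" for m
            using um Um[of m] by measurable
          show "integrable lborel (\<lambda>x. indicator {0..1::real} x *\<^sub>R (u x)\<^sup>2)"
            using sq unfolding set_integrable_def .
          show "AE x in lborel. norm (indicator {0..1} x *\<^sub>R (u x - U m x)\<^sup>2) \<le> indicator {0..1::real} x *\<^sub>R (u x)\<^sup>2" for m
          proof (intro AE_I2)
            fix x
            have "0 \<le> u x - U m x" "u x - U m x \<le> u x" using le[of m x] Un[of m x] by auto
            then have "(u x - U m x)\<^sup>2 \<le> (u x)\<^sup>2" by (intro power_mono) auto
            then show "norm (indicator {0..1} x *\<^sub>R (u x - U m x)\<^sup>2) \<le> indicator {0..1::real} x *\<^sub>R (u x)\<^sup>2"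
              by (auto simp: indicator_def)
          qed
          show "AE x in lborel. (\<lambda>m. indicator {0..1} x *\<^sub>R (u x - U m x)\<^sup>2) \<longlonglongrightarrow> 0"
          proof (intro AE_I2)
            fix x
            have "(\<lambda>m. u x - U m x) \<longlonglongrightarrow> u x - u x"
              using lim[of x] by (intro tendsto_diff) auto
            then have "(\<lambda>m. indicator {0..1} x *\<^sub>R (u x - U m x)\<^sup>2) \<longlonglongrightarrow> indicator {0..1::real} x *\<^sub>R (u x - u x)\<^sup>2"
              by (intro tendsto_scaleR tendsto_power tendsto_const)
            then show "(\<lambda>m. indicator {0..1} x *\<^sub>R (u x - U m x)\<^sup>2) \<longlonglongrightarrow> 0" by simp
          qed
        qed
        then show "(\<lambda>m. LBINT s:{0..1}. (u s - U m s)\<^sup>2) \<longlonglongrightarrow> 0"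
          by (simp add: set_lebesgue_integral_def)
      qed
    qed
  qed
  with sq show ?thesis by simp
qed

lemma Qc_L2:
  assumes u: "L2_01 u"
  shows "Qc u"
proof -
  have um: "u \<in> borel_measurable lborel" using u unfolding L2_01_def by simp
  have sq: "set_integrable lborel {0..1} (\<lambda>t. (u t)\<^sup>2)" using u unfolding L2_01_def by simp
  define p where "p x = max (u x) 0" for x
  define q where "q x = max (- u x) 0" for x
  have pm: "p \<in> borel_measurable lborel" unfolding p_def using um by measurable
  have qm: "q \<in> borel_measurable lborel" unfolding q_def using um by measurable
  have sp: "set_integrable lborel {0..1} (\<lambda>t. (p t)\<^sup>2)"
    by (rule sq_bound_int[OF sq pm]) (auto simp: p_def)
  have sqq: "set_integrable lborel {0..1} (\<lambda>t. (q t)\<^sup>2)"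
    by (rule sq_bound_int[OF sq qm]) (auto simp: q_def)
  have "Qc (\<lambda>s. p s - q s)"
    by (rule Qc_diff[OF L2_01_I[OF pm sp] L2_01_I[OF qm sqq] Qc_nonneg[OF pm _ sp] Qc_nonneg[OF qm _ sqq]])
       (auto simp: p_def q_def)
  moreover have "(\<lambda>s. p s - q s) = u" by (auto simp: p_def q_def max_def)
  ultimately show ?thesis by simp
qed

lemma Bn_lim:
  assumes "L2_01 u" "L2_01 v"
  shows "(\<lambda>n. Bn n u v) \<longlonglongrightarrow> (LBINT s:{0..1}. u s * v s)"
proof -
  have a: "(\<lambda>n. Gn n (\<lambda>s. u s + v s) (\<lambda>s. u s + v s)) \<longlonglongrightarrow> 0"
    using Qc_L2[OF L2_add[OF assms]] unfolding Qc_def .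
  have b: "(\<lambda>n. Gn n (\<lambda>s. u s - v s) (\<lambda>s. u s - v s)) \<longlonglongrightarrow> 0"
    using Qc_L2[OF L2_diff[OF assms]] unfolding Qc_def .
  have "(\<lambda>n. Gn n u v) \<longlonglongrightarrow> (0 - 0) / 4"
    unfolding G_polar[OF assms] by (intro tendsto_divide tendsto_diff a b) auto
  then have "(\<lambda>n. (LBINT s:{0..1}. u s * v s) - Gn n u v) \<longlonglongrightarrow> (LBINT s:{0..1}. u s * v s) - 0"
    by (intro tendsto_diff tendsto_const) simp
  then show ?thesis unfolding Gn_def by simp
qed


lemma (in prob_space) normal_interval_lb:
  assumes Z: "distributed M lborel Z (normal_density 0 \<sigma>)" and \<sigma>: "0 < \<sigma>" and uv: "u \<le> v"
    and bnd: "\<And>x. x \<in> {u..v} \<Longrightarrow> \<bar>x\<bar> \<le> \<sigma> * R"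
  shows "(v - u) * (exp (- R\<^sup>2 / 2) / (\<sigma> * sqrt (2 * pi))) \<le> prob {\<omega> \<in> space M. Z \<omega> \<in> {u..v}}"
proof -
  define c where "c = exp (- R\<^sup>2 / 2) / (\<sigma> * sqrt (2 * pi))"
  have c0: "0 \<le> c" unfolding c_def using \<sigma> by simp
  have dens: "c \<le> normal_density 0 \<sigma> x" if x: "x \<in> {u..v}" for x
  proof -
    have "\<bar>x\<bar>\<^sup>2 \<le> (\<sigma> * R)\<^sup>2" by (rule power_mono[OF bnd[OF x]]) simp
    then have "x\<^sup>2 / (2 * \<sigma>\<^sup>2) \<le> R\<^sup>2 / 2"
      using \<sigma> by (simp add: field_simps power_mult_distrib)
    then have "exp (- R\<^sup>2 / 2) \<le> exp (-(x - 0)\<^sup>2 / (2 * \<sigma>\<^sup>2))" by simp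
    moreover have "sqrt (2 * pi * \<sigma>\<^sup>2) = \<sigma> * sqrt (2 * pi)"
      using \<sigma> by (simp add: real_sqrt_mult mult.commute)
    ultimately show ?thesis
      unfolding c_def normal_density_def using \<sigma> by (simp add: divide_right_mono)
  qed
  have "emeasure M (Z -` {u..v} \<inter> space M) = (\<integral>\<^sup>+x. ennreal (normal_density 0 \<sigma> x) * indicator {u..v} x \<partial>lborel)"
    using distributed_emeasure[OF Z, of "{u..v}"] by simp
  also have "\<dots> \<ge> (\<integral>\<^sup>+x. ennreal c * indicator {u..v} x \<partial>lborel)"
    by (intro nn_integral_mono) (auto simp: indicator_def dens)
  finally have "ennreal c * emeasure lborel {u..v} \<le> emeasure M (Z -` {u..v} \<inter> space M)"
    by (simp add: nn_integral_cmult_indicator)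
  then have "ennreal (c * (v - u)) \<le> ennreal (prob (Z -` {u..v} \<inter> space M))"
    using uv c0 by (simp add: emeasure_eq_measure ennreal_mult')
  then have "c * (v - u) \<le> prob (Z -` {u..v} \<inter> space M)"
    by (simp add: ennreal_le_iff)
  moreover have "Z -` {u..v} \<inter> space M = {\<omega> \<in> space M. Z \<omega> \<in> {u..v}}" by auto
  ultimately show ?thesis unfolding c_def by (simp add: mult.commute)
qed

definition logi :: "real \<Rightarrow> real" where "logi t = exp t / (1 + exp t)"

lemma logi_alt: "logi t - 1/2 = (exp t - 1) / (2 * (1 + exp t))"
proof -
  have p: "1 + exp t \<noteq> 0" using exp_gt_zero[of t] by linarith
  show ?thesis unfolding logi_def using p by (simp add: field_simps)
qed

lemma logi_neg: "logi (- t) - 1/2 = - (logi t - 1/2)"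
proof -
  have g: "\<And>a::real. 0 < a \<Longrightarrow> (1/a - 1) / (2 * (1 + 1/a)) = - ((a - 1) / (2 * (1 + a)))"
    by (simp add: divide_simps)
  show ?thesis unfolding logi_alt exp_minus inverse_eq_divide by (rule g) simp
qed

lemma logi_nonneg: "0 \<le> t \<Longrightarrow> 0 \<le> logi t - 1/2"
  unfolding logi_alt by (simp add: add_pos_pos)

lemma logi_upper:
  assumes t: "0 \<le> t" shows "logi t - 1/2 \<le> t / 2"
proof -
  have "1 + (-t) \<le> exp (-t)" by (rule exp_ge_add_one_self)
  then have "exp t * (1 - t) \<le> exp t * exp (-t)" by (intro mult_left_mono) auto
  then have "exp t * (1 - t) \<le> 1" by (simp add: exp_minus_inverse)
  then have "exp t - 1 \<le> t * (1 + exp t)" using t by (simp add: algebra_simps)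
  then show ?thesis unfolding logi_alt by (simp add: divide_simps add_pos_pos) (simp add: algebra_simps)
qed

lemma logi_lower:
  assumes t: "0 \<le> t" "t \<le> 1/4" shows "6/25 * t \<le> logi t - 1/2"
proof -
  have e: "1 + t + t\<^sup>2 / 2 \<le> exp t" by (rule exp_lower_Taylor_quadratic[OF t(1)])
  have p0: "0 \<le> 25 - 12 * t" using t by simp
  have "t\<^sup>2 \<le> (1/4)\<^sup>2" using power_mono[OF t(2) t(1), of 2] by simp
  then have "t\<^sup>2 \<le> 1/16" by (simp add: power2_eq_square)
  then have q: "0 \<le> t * (1 + t/2 - 6 * t\<^sup>2)" using t by (intro mult_nonneg_nonneg) auto
  have "(1 + t + t\<^sup>2 / 2) * (25 - 12 * t) = 25 + 12 * t + t * (1 + t/2 - 6 * t\<^sup>2)"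
    by (simp add: algebra_simps power2_eq_square power3_eq_cube)
  then have "25 + 12 * t \<le> (1 + t + t\<^sup>2 / 2) * (25 - 12 * t)" using q by simp
  also have "\<dots> \<le> exp t * (25 - 12 * t)" by (rule mult_right_mono[OF e p0])
  finally have "12 * t * (1 + exp t) \<le> 25 * (exp t - 1)" by (simp add: algebra_simps)
  then show ?thesis unfolding logi_alt by (simp add: divide_simps add_pos_pos) (simp add: algebra_simps)
qed

lemma logi_band:
  assumes "a \<le> \<bar>t\<bar>" "\<bar>t\<bar> \<le> b" "0 \<le> a" "b \<le> 1/4"
  shows "6/25 * a \<le> \<bar>logi t - 1/2\<bar> \<and> \<bar>logi t - 1/2\<bar> \<le> b / 2"
proof -
  have "6/25 * a \<le> logi \<bar>t\<bar> - 1/2 \<and> logi \<bar>t\<bar> - 1/2 \<le> b/2"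
    using logi_lower[of "\<bar>t\<bar>"] logi_upper[of "\<bar>t\<bar>"] assms by auto
  moreover have "\<bar>logi t - 1/2\<bar> = logi \<bar>t\<bar> - 1/2"
  proof (cases "0 \<le> t")
    case True then show ?thesis using logi_nonneg[of t] by simp
  next
    case False
    then have "\<bar>t\<bar> = - t" by simp
    then show ?thesis using logi_neg[of t] logi_nonneg[of "-t"] False by simp
  qed
  ultimately show ?thesis by simp
qed


definition Zn :: "(real \<Rightarrow> 'a \<Rightarrow> real) \<Rightarrow> (nat \<Rightarrow> real) \<Rightarrow> nat \<Rightarrow> 'a \<Rightarrow> real" where
  "Zn W d n \<omega> = (\<Sum>k<2^n. d k * (W (real (Suc k) / 2^n) \<omega> - W (real k / 2^n) \<omega>))"

lemma dy_pts:
  assumes "k < 2^n"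
  shows "0 \<le> real k / 2^n" "real k / 2^n < real (Suc k) / 2^n" "real (Suc k) / 2^n \<le> 1"
    "real (Suc k) / 2^n - real k / 2^n = 1 / 2^n"
proof -
  have "real (Suc k) \<le> 2^n"
    by (metis Suc_leI assms of_nat_le_iff of_nat_numeral of_nat_power)
  then show "real (Suc k) / 2^n \<le> 1" by simp
qed (auto simp: divide_strict_right_mono diff_divide_distrib[symmetric])

lemma bm_Zn:
  assumes bm: "brownian_motion_01 M W" and K: "{k. k < 2^n \<and> d k \<noteq> 0} \<noteq> {}"
  shows "distributed M lborel (Zn W d n) (normal_density 0 (sqrt (\<Sum>k<2^n. (d k)\<^sup>2 / 2^n)))"
proof -
  interpret prob_space M using bm unfolding brownian_motion_01_def by simp
  define K where "K = {k. k < 2^n \<and> d k \<noteq> 0}"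
  define X where "X k \<omega> = d k * (W (real (Suc k) / 2^n) \<omega> - W (real k / 2^n) \<omega>)" for k \<omega>
  define ts where "ts i = real i / 2^n" for i
  have finK: "finite K" unfolding K_def by simp
  have Ksub: "K \<subseteq> {..<2^n}" unfolding K_def by auto
  have ind0: "indep_vars (\<lambda>_. borel) (\<lambda>i \<omega>. W (ts (Suc i)) \<omega> - W (ts i) \<omega>) {..<2^n}"
  proof -
    have "0 \<le> ts 0" "ts (2^n) \<le> 1" "\<forall>i<2^n. ts i < ts (Suc i)"
      unfolding ts_def by (auto simp: divide_strict_right_mono)
    then show ?thesis using bm unfolding brownian_motion_01_def by blast
  qed
  have ind1: "indep_vars (\<lambda>_. borel) (\<lambda>i \<omega>. (\<lambda>x. d i * x) ((\<lambda>i \<omega>. W (ts (Suc i)) \<omega> - W (ts i) \<omega>) i \<omega>)) {..<2^n}"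
    by (rule indep_vars_compose2[OF ind0]) simp
  have ind: "indep_vars (\<lambda>_. borel) X K"
    using indep_vars_subset[OF ind1 Ksub] unfolding X_def ts_def by simp
  have dist: "distributed M lborel (X k) (normal_density 0 (\<bar>d k\<bar> * sqrt (1 / 2^n)))" if k: "k \<in> K" for k
  proof -
    have kn: "k < 2^n" and dk: "d k \<noteq> 0" using k unfolding K_def by auto
    have "distributed M lborel (\<lambda>\<omega>. W (real (Suc k) / 2^n) \<omega> - W (real k / 2^n) \<omega>)
            (normal_density 0 (sqrt (real (Suc k) / 2^n - real k / 2^n)))"
      using bm dy_pts[OF kn] unfolding brownian_motion_01_def by blast
    then have D: "distributed M lborel (\<lambda>\<omega>. W (real (Suc k) / 2^n) \<omega> - W (real k / 2^n) \<omega>)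
            (normal_density 0 (sqrt (1 / 2^n)))" using dy_pts(4)[OF kn] by simp
    have "distributed M lborel (\<lambda>x. 0 + d k * (W (real (Suc k) / 2^n) x - W (real k / 2^n) x))
            (normal_density (0 + d k * 0) (\<bar>d k\<bar> * sqrt (1 / 2^n)))"
      by (rule normal_density_affine[OF D]) (use dk in auto)
    then show ?thesis unfolding X_def by simp
  qed
  have S: "distributed M lborel (\<lambda>x. \<Sum>i\<in>K. X i x) (normal_density (\<Sum>i\<in>K. 0) (sqrt (\<Sum>i\<in>K. (\<bar>d i\<bar> * sqrt (1 / 2^n))\<^sup>2)))"
    by (rule sum_indep_normal[OF finK _ ind _ dist]) (use K in \<open>auto simp: K_def\<close>)
  have e1: "(\<lambda>x. \<Sum>i\<in>K. X i x) = Zn W d n"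
  proof
    fix x show "(\<Sum>i\<in>K. X i x) = Zn W d n x"
      unfolding Zn_def X_def by (rule sum.mono_neutral_left) (auto simp: K_def)
  qed
  have e2: "(\<Sum>i\<in>K. (\<bar>d i\<bar> * sqrt (1 / 2^n))\<^sup>2) = (\<Sum>k<2^n. (d k)\<^sup>2 / 2^n)"
  proof -
    have "(\<Sum>i\<in>K. (\<bar>d i\<bar> * sqrt (1 / 2^n))\<^sup>2) = (\<Sum>i\<in>K. (d i)\<^sup>2 / 2^n)"
      by (simp add: power_mult_distrib)
    also have "\<dots> = (\<Sum>k<2^n. (d k)\<^sup>2 / 2^n)"
      by (rule sum.mono_neutral_left) (auto simp: K_def)
    finally show ?thesis .
  qed
  show ?thesis using S unfolding e1 e2 by simp
qed


lemma Zn_meas: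
  assumes "\<And>t. t \<in> {0..1} \<Longrightarrow> W t \<in> borel_measurable N"
  shows "Zn W d n \<in> borel_measurable N"
proof -
  have "(\<lambda>\<omega>. \<Sum>k<2^n. d k * (W (real (Suc k) / 2^n) \<omega> - W (real k / 2^n) \<omega>)) \<in> borel_measurable N"
  proof (rule borel_measurable_sum)
    fix k assume "k \<in> {..<(2::nat)^n}"
    then have k: "k < 2^n" by simp
    have a: "W (real (Suc k) / 2^n) \<in> borel_measurable N" using assms dy_pts[OF k] by simp
    have kk: "real k \<le> 2^n" using k
      by (metis less_imp_le of_nat_le_iff of_nat_numeral of_nat_power)
    have "real k / 2^n \<in> {0..1}" using kk by (auto simp: field_simps)
    then have b: "W (real k / 2^n) \<in> borel_measurable N" using assms by simp
    show "(\<lambda>\<omega>. d k * (W (real (Suc k) / 2^n) \<omega> - W (real k / 2^n) \<omega>)) \<in> borel_measurable N"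
      using a b by measurable
  qed
  then show ?thesis unfolding Zn_def[abs_def] .
qed

lemma incr_F:
  assumes "L2_01 f" "k < 2^n"
  shows "(LBINT s:{0..real (Suc k) / 2^n}. f s) - (LBINT s:{0..real k / 2^n}. f s) = SI n f k"
proof -
  have "(LBINT s:{0..real (Suc k) / 2^n}. f s) = (LBINT s:{0..real k / 2^n}. f s) + (LBINT s:{real k / 2^n..real (Suc k) / 2^n}. f s)"
  proof (rule split_Icc_integral)
    show "set_integrable lborel {0..real (Suc k) / 2 ^ n} f"
      using dy_pts[OF assms(2)] by (intro set_integrable_subset[OF L2_int[OF assms(1)]]) auto
  qed (use dy_pts[OF assms(2)] in auto)
  then show ?thesis unfolding SI_def iv_def by simp
qed

lemma dyadic_decomp:
  assumes f: "L2_01 f" and g: "L2_01 g"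
  shows "dyadic_stoch_sum (model_X f g Y W) (\<lambda>t. f t - g t) n \<omega> =
     Y \<omega> * Bn n (\<lambda>t. f t - g t) f + (1 - Y \<omega>) * Bn n (\<lambda>t. f t - g t) g
       + Zn W (\<lambda>k. 2^n * SI n (\<lambda>t. f t - g t) k) n \<omega>"
proof -
  let ?h = "\<lambda>t. f t - g t"
  have "dyadic_stoch_sum (model_X f g Y W) ?h n \<omega> =
     (\<Sum>k<2^n. (2^n * SI n ?h k) * (Y \<omega> * SI n f k + (1 - Y \<omega>) * SI n g k
        + (W (real (Suc k) / 2^n) \<omega> - W (real k / 2^n) \<omega>)))"
    unfolding dyadic_stoch_sum_def
  proof (rule sum.cong[OF refl])
    fix k assume "k \<in> {..<(2::nat)^n}"
    then have k: "k < 2^n" by simp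
    have "model_X f g Y W (real (Suc k) / 2 ^ n) \<omega> - model_X f g Y W (real k / 2 ^ n) \<omega>
      = Y \<omega> * ((LBINT s:{0..real (Suc k) / 2^n}. f s) - (LBINT s:{0..real k / 2^n}. f s))
        + (1 - Y \<omega>) * ((LBINT s:{0..real (Suc k) / 2^n}. g s) - (LBINT s:{0..real k / 2^n}. g s))
        + (W (real (Suc k) / 2^n) \<omega> - W (real k / 2^n) \<omega>)"
    proof -
      have gen: "\<And>y a b c d e f'. (y*b + (1-y)*d + f') - (y*a + (1-y)*c + e) = y*(b-a) + (1-y)*(d-c) + (f'-(e::real))"
        by (simp add: algebra_simps)
      show ?thesis unfolding model_X_def by (rule gen)
    qed
    also have "\<dots> = Y \<omega> * SI n f k + (1 - Y \<omega>) * SI n g k + (W (real (Suc k) / 2^n) \<omega> - W (real k / 2^n) \<omega>)"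
      using incr_F[OF f k] incr_F[OF g k] by simp
    finally show "2 ^ n * (LBINT s:{real k / 2 ^ n..real (Suc k) / 2 ^ n}. f s - g s) *
         (model_X f g Y W (real (Suc k) / 2 ^ n) \<omega> - model_X f g Y W (real k / 2 ^ n) \<omega>) =
         2 ^ n * SI n ?h k * (Y \<omega> * SI n f k + (1 - Y \<omega>) * SI n g k + (W (real (Suc k) / 2 ^ n) \<omega> - W (real k / 2 ^ n) \<omega>))"
      unfolding SI_def iv_def by simp
  qed
  also have "\<dots> = Y \<omega> * Bn n ?h f + (1 - Y \<omega>) * Bn n ?h g + Zn W (\<lambda>k. 2^n * SI n ?h k) n \<omega>"
  proof -
    have lin: "\<And>(a::nat\<Rightarrow>real) b c w y z S. (\<Sum>k\<in>S. a k * (y * b k + z * c k + w k))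
        = y * (\<Sum>k\<in>S. a k * b k) + z * (\<Sum>k\<in>S. a k * c k) + (\<Sum>k\<in>S. a k * w k)"
      by (simp add: sum.distrib sum_distrib_left distrib_left mult.left_commute)
    have bn: "\<And>u. Bn n ?h u = (\<Sum>k<2^n. (2^n * SI n ?h k) * SI n u k)"
      unfolding Bn_def by (simp add: sum_distrib_left mult.assoc)
    show ?thesis unfolding bn Zn_def by (rule lin)
  qed
  finally show ?thesis .
qed

lemma indep_Y_Z:
  fixes Y :: "'a \<Rightarrow> real" and y :: real
  assumes P: "prob_space M"
    and ind: "prob_space.indep_set M
           (sigma_sets (space M) {Y -` A \<inter> space M | A. A \<in> sets borel})
           (sigma_sets (space M)
              (\<Union>t\<in>{0..1}. {W t -` A \<inter> space M | A. A \<in> sets borel}))"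
    and B: "B \<in> sets borel"
  shows "measure M ({\<omega>\<in>space M. Y \<omega> = y} \<inter> {\<omega>\<in>space M. Zn W d n \<omega> \<in> B})
         = measure M {\<omega>\<in>space M. Y \<omega> = y} * measure M {\<omega>\<in>space M. Zn W d n \<omega> \<in> B}"
proof -
  interpret prob_space M by (rule P)
  define G where "G = (\<Union>t\<in>{0..1}. {W t -` A \<inter> space M | A. A \<in> sets borel})"
  define N where "N = sigma (space M) G"
  have GP: "G \<subseteq> Pow (space M)" unfolding G_def by auto
  have spN: "space N = space M" unfolding N_def by (simp add: space_measure_of_conv)
  have sN: "sets N = sigma_sets (space M) G" unfolding N_def by (rule sets_measure_of[OF GP])
  have Wm: "W t \<in> borel_measurable N" if t: "t \<in> {0..1}" for t
  proof (rule measurableI)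
    fix A :: "real set" assume "A \<in> sets borel"
    then have "W t -` A \<inter> space M \<in> {W t -` A \<inter> space M | A. A \<in> sets borel}" by blast
    then have "W t -` A \<inter> space M \<in> G" unfolding G_def using t by (intro UN_I)
    then show "W t -` A \<inter> space N \<in> sets N" unfolding spN sN by (rule sigma_sets.Basic)
  qed simp
  have Zm: "Zn W d n \<in> borel_measurable N" by (rule Zn_meas[OF Wm])
  have "Zn W d n -` B \<inter> space N \<in> sets N" by (rule measurable_sets[OF Zm B])
  moreover have "Zn W d n -` B \<inter> space N = {\<omega>\<in>space M. Zn W d n \<omega> \<in> B}" unfolding spN by auto
  ultimately have Zs: "{\<omega>\<in>space M. Zn W d n \<omega> \<in> B} \<in> sigma_sets (space M) G" unfolding sN by simp
  have "{y} \<in> sets (borel :: real measure)" by simp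
  then have "Y -` {y} \<inter> space M \<in> {Y -` A \<inter> space M | A. A \<in> sets borel}" by blast
  then have Ys: "{\<omega>\<in>space M. Y \<omega> = y} \<in> sigma_sets (space M) {Y -` A \<inter> space M | A. A \<in> sets borel}"
  proof -
    assume "Y -` {y} \<inter> space M \<in> {Y -` A \<inter> space M | A. A \<in> sets borel}"
    then have "Y -` {y} \<inter> space M \<in> sigma_sets (space M) {Y -` A \<inter> space M | A. A \<in> sets borel}"
      by (rule sigma_sets.Basic)
    moreover have "Y -` {y} \<inter> space M = {\<omega>\<in>space M. Y \<omega> = y}" by auto
    ultimately show ?thesis by simp
  qed
  show ?thesis using indep_setD[OF ind[unfolded G_def[symmetric]] Ys Zs] .
qed


lemma delta_bound:
  assumes "0 \<le> (D::real)"
  shows "exp (- (1 + D/2)\<^sup>2 / 2) / (2 * sqrt (2 * pi)) \<le> 2/15"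
proof -
  have "1 \<le> (1 + D/2)\<^sup>2" using one_le_power[of "1 + D/2" 2] assms by simp
  then have "exp (- (1 + D/2)\<^sup>2 / 2) \<le> exp (- (1/2::real))" by simp
  also have "exp (- (1/2::real)) \<le> 2/3"
  proof -
    have "1 + 1/2 \<le> exp (1/2::real)" by (rule exp_ge_add_one_self)
    then have "1 / exp (1/2::real) \<le> 1 / (3/2)" by (intro divide_left_mono) auto
    then show ?thesis by (simp add: exp_minus inverse_eq_divide)
  qed
  finally have e: "exp (- (1 + D/2)\<^sup>2 / 2) \<le> 2/3" .
  have "(5/2)\<^sup>2 \<le> 2 * pi" using pi_approx by (simp add: power2_eq_square)
  then have "sqrt ((5/2)\<^sup>2) \<le> sqrt (2 * pi)" by (rule real_sqrt_le_mono)
  then have s: "5/2 \<le> sqrt (2 * pi)" by simp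
  have "exp (- (1 + D/2)\<^sup>2 / 2) / (2 * sqrt (2 * pi)) \<le> (2/3) / (2 * (5/2))"
    by (rule frac_le) (use e s in auto)
  then show ?thesis by simp
qed

lemma (in prob_space) quarter_bound:
  assumes Z: "distributed M lborel Z (normal_density 0 \<sigma>)" and \<sigma>: "0 < \<sigma>"
    and ind: "prob ({\<omega>\<in>space M. Y \<omega> = y} \<inter> {\<omega>\<in>space M. Z \<omega> \<in> {u..v}})
              = prob {\<omega>\<in>space M. Y \<omega> = y} * prob {\<omega>\<in>space M. Z \<omega> \<in> {u..v}}"
    and py: "prob {\<omega>\<in>space M. Y \<omega> = y} = 1/2"
    and uv: "u \<le> v" and bnd: "\<And>x. x \<in> {u..v} \<Longrightarrow> \<bar>x\<bar> \<le> \<sigma> * R"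
  shows "(v - u) * (exp (- R\<^sup>2 / 2) / (\<sigma> * sqrt (2 * pi))) / 2
           \<le> prob ({\<omega>\<in>space M. Y \<omega> = y} \<inter> {\<omega>\<in>space M. Z \<omega> \<in> {u..v}})"
  using normal_interval_lb[OF Z \<sigma> uv bnd] unfolding ind py by simp


theorem proposition5:
  fixes M :: "'a measure"
    and Y :: "'a \<Rightarrow> real"
    and W :: "real \<Rightarrow> 'a \<Rightarrow> real"
    and f g :: "real \<Rightarrow> real"
    and I :: "'a \<Rightarrow> real"
    and \<epsilon> :: real
  assumes "prob_space M"
    and "L2_01 f" and "L2_01 g"
    and "L2_norm_01 (\<lambda>t. f t - g t) > 0"
    and "Y \<in> borel_measurable M"
    and "\<forall>\<omega>\<in>space M. Y \<omega> \<in> {0, 1}"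
    and "measure M {\<omega>\<in>space M. Y \<omega> = 1} = 1/2"
    and "brownian_motion_01 M W"
    and "prob_space.indep_set M
           (sigma_sets (space M) {Y -` A \<inter> space M | A. A \<in> sets borel})
           (sigma_sets (space M)
              (\<Union>t\<in>{0..1}. {W t -` A \<inter> space M | A. A \<in> sets borel}))"
    and "is_stoch_integral M (model_X f g Y W) (\<lambda>t. f t - g t) I"
    and "\<epsilon> \<le> min (1/4) (L2_norm_01 (\<lambda>t. f t - g t))"
  shows "let \<Delta> = L2_norm_01 (\<lambda>t. f t - g t);
             \<delta> = exp (- (1 + \<Delta> / 2)\<^sup>2 / 2) / (2 * sqrt (2 * pi))
         in measure M {\<omega>\<in>space M. \<delta> * \<epsilon> \<le> \<bar>eta_reg f g (I \<omega>) - 1/2\<bar> \<and>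
                                 \<bar>eta_reg f g (I \<omega>) - 1/2\<bar> \<le> \<epsilon>}
            \<ge> \<delta> * \<epsilon> / \<Delta>"
proof -
  interpret prob_space M by (rule assms(1))
  have Lf: "L2_01 f" and Lg: "L2_01 g" using assms(2,3) .
  define h where "h = (\<lambda>t. f t - g t)"
  have Lh: "L2_01 h" unfolding h_def by (rule L2_diff[OF Lf Lg])
  define \<Delta> where "\<Delta> = L2_norm_01 h"
  have Dpos: "0 < \<Delta>" using assms(4) unfolding \<Delta>_def h_def .
  define R where "R = 1 + \<Delta>/2"
  define \<delta> where "\<delta> = exp (- R\<^sup>2 / 2) / (2 * sqrt (2 * pi))"
  define E where "E = {\<omega>\<in>space M. \<delta> * \<epsilon> \<le> \<bar>eta_reg f g (I \<omega>) - 1/2\<bar> \<and> \<bar>eta_reg f g (I \<omega>) - 1/2\<bar> \<le> \<epsilon>}"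
  have \<delta>pos: "0 < \<delta>" unfolding \<delta>_def by simp
  have goal_eq: "?thesis \<longleftrightarrow> \<delta> * \<epsilon> / \<Delta> \<le> measure M E"
    unfolding Let_def \<Delta>_def \<delta>_def R_def E_def h_def by simp
  show ?thesis
  proof (cases "\<epsilon> \<le> 0")
    case True
    have "\<delta> * \<epsilon> \<le> 0" using True \<delta>pos by (simp add: mult_nonneg_nonpos)
    then have "\<delta> * \<epsilon> / \<Delta> \<le> 0" using Dpos by (simp add: divide_nonpos_pos)
    then show ?thesis unfolding goal_eq using measure_nonneg[of M E] by linarith
  next
    case False
    then have epos: "0 < \<epsilon>" by simp
    have eD: "\<epsilon> \<le> \<Delta>" and e4: "\<epsilon> \<le> 1/4" using assms(11) unfolding \<Delta>_def h_def by auto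
    have sqnn: "\<And>u::real\<Rightarrow>real. 0 \<le> (LBINT s:{0..1::real}. (u s)\<^sup>2)" by (rule set_int_nonneg) simp
    have D2: "\<Delta>\<^sup>2 = (LBINT s:{0..1}. h s * h s)"
      unfolding \<Delta>_def L2_norm_01_def using sqnn[of h] by (simp add: power2_eq_square)
    have F2: "(L2_norm_01 f)\<^sup>2 = (LBINT s:{0..1}. f s * f s)"
      unfolding L2_norm_01_def using sqnn[of f] by (simp add: power2_eq_square)
    have G2: "(L2_norm_01 g)\<^sup>2 = (LBINT s:{0..1}. g s * g s)"
      unfolding L2_norm_01_def using sqnn[of g] by (simp add: power2_eq_square)
    define c where "c = (L2_norm_01 f)\<^sup>2 / 2 - (L2_norm_01 g)\<^sup>2 / 2"
    have eta: "eta_reg f g x = logi (x - c)" for x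
    proof -
      have eq: "x - (L2_norm_01 f)\<^sup>2 / 2 + (L2_norm_01 g)\<^sup>2 / 2 = x - c" unfolding c_def by simp
      show ?thesis by (simp only: eta_reg_def logi_def Let_def eq)
    qed
    have iA: "(LBINT s:{0..1}. h s * f s) = (LBINT s:{0..1}. f s * f s) - (LBINT s:{0..1}. g s * f s)"
    proof -
      have "(LBINT s:{0..1}. h s * f s) = (LBINT s:{0..1}. f s * f s - g s * f s)"
        unfolding h_def by (simp add: left_diff_distrib)
      also have "\<dots> = (LBINT s:{0..1}. f s * f s) - (LBINT s:{0..1}. g s * f s)"
        by (rule set_integral_diff(2)[OF L2_prod[OF Lf Lf] L2_prod[OF Lg Lf]])
      finally show ?thesis .
    qed
    have iB: "(LBINT s:{0..1}. h s * g s) = (LBINT s:{0..1}. f s * g s) - (LBINT s:{0..1}. g s * g s)"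
    proof -
      have "(LBINT s:{0..1}. h s * g s) = (LBINT s:{0..1}. f s * g s - g s * g s)"
        unfolding h_def by (simp add: left_diff_distrib)
      also have "\<dots> = (LBINT s:{0..1}. f s * g s) - (LBINT s:{0..1}. g s * g s)"
        by (rule set_integral_diff(2)[OF L2_prod[OF Lf Lg] L2_prod[OF Lg Lg]])
      finally show ?thesis .
    qed
    have iH: "(LBINT s:{0..1}. h s * h s) = (LBINT s:{0..1}. h s * f s) - (LBINT s:{0..1}. h s * g s)"
    proof -
      have "(LBINT s:{0..1}. h s * h s) = (LBINT s:{0..1}. h s * f s - h s * g s)"
        unfolding h_def by (simp add: right_diff_distrib)
      also have "\<dots> = (LBINT s:{0..1}. h s * f s) - (LBINT s:{0..1}. h s * g s)"
        by (rule set_integral_diff(2)[OF L2_prod[OF Lh Lf] L2_prod[OF Lh Lg]])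
      finally show ?thesis .
    qed
    have comm: "(LBINT s:{0..1}. g s * f s) = (LBINT s:{0..1}. f s * g s)"
      by (simp add: mult.commute)
    have mA: "(LBINT s:{0..1}. h s * f s) - c = \<Delta>\<^sup>2 / 2"
      using iA iB iH comm D2 F2 G2 unfolding c_def by linarith
    have mB: "(LBINT s:{0..1}. h s * g s) - c = - (\<Delta>\<^sup>2 / 2)"
      using iA iB iH comm D2 F2 G2 unfolding c_def by linarith
    have aL: "(\<lambda>n. Bn n h f - c) \<longlonglongrightarrow> \<Delta>\<^sup>2 / 2"
      using tendsto_diff[OF Bn_lim[OF Lh Lf] tendsto_const[of c]] unfolding mA .
    have bL: "(\<lambda>n. Bn n h g - c) \<longlonglongrightarrow> - (\<Delta>\<^sup>2 / 2)"
      using tendsto_diff[OF Bn_lim[OF Lh Lg] tendsto_const[of c]] unfolding mB .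
    have sL: "(\<lambda>n. sqrt (Bn n h h)) \<longlonglongrightarrow> \<Delta>"
    proof -
      have "(\<lambda>n. sqrt (Bn n h h)) \<longlonglongrightarrow> sqrt (\<Delta>\<^sup>2)"
        using tendsto_real_sqrt[OF Bn_lim[OF Lh Lh]] unfolding D2 .
      then show ?thesis using Dpos by simp
    qed
    have DR: "\<Delta> * R - \<bar>\<Delta>\<^sup>2 / 2\<bar> = \<Delta>" unfolding R_def by (simp add: power2_eq_square algebra_simps)
    have DR': "\<Delta> * R - \<bar>- (\<Delta>\<^sup>2 / 2)\<bar> = \<Delta>" unfolding R_def by (simp add: power2_eq_square algebra_simps)
    have b\<Delta>: "19/20 * \<epsilon> < \<Delta>" using eD Dpos by linarith
    have ev1: "eventually (\<lambda>n. 19/20 * \<epsilon> < sqrt (Bn n h h) * R - \<bar>Bn n h f - c\<bar>) sequentially"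
    proof (rule order_tendstoD(1))
      show "(\<lambda>n. sqrt (Bn n h h) * R - \<bar>Bn n h f - c\<bar>) \<longlonglongrightarrow> \<Delta> * R - \<bar>\<Delta>\<^sup>2 / 2\<bar>"
        by (intro tendsto_diff tendsto_mult tendsto_rabs sL aL tendsto_const)
    qed (use DR b\<Delta> in simp)
    have ev2: "eventually (\<lambda>n. 19/20 * \<epsilon> < sqrt (Bn n h h) * R - \<bar>Bn n h g - c\<bar>) sequentially"
    proof (rule order_tendstoD(1))
      show "(\<lambda>n. sqrt (Bn n h h) * R - \<bar>Bn n h g - c\<bar>) \<longlonglongrightarrow> \<Delta> * R - \<bar>- (\<Delta>\<^sup>2 / 2)\<bar>"
        by (intro tendsto_diff tendsto_mult tendsto_rabs sL bL tendsto_const)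
    qed (use DR' b\<Delta> in simp)
    have ev3: "eventually (\<lambda>n. 0 < sqrt (Bn n h h)) sequentially"
      by (rule order_tendstoD(1)[OF sL Dpos])
    have stoch: "\<And>e. 0 < e \<Longrightarrow> (\<lambda>n. measure M {\<omega>\<in>space M. \<bar>dyadic_stoch_sum (model_X f g Y W) h n \<omega> - I \<omega>\<bar> > e}) \<longlonglongrightarrow> 0"
      using assms(10) unfolding is_stoch_integral_def h_def[symmetric] by blast
    have ev4: "eventually (\<lambda>n. measure M {\<omega>\<in>space M. \<bar>dyadic_stoch_sum (model_X f g Y W) h n \<omega> - I \<omega>\<bar> > \<epsilon>/100} < 2/5 * \<delta> * \<epsilon> / \<Delta>) sequentially"
      by (rule order_tendstoD(2)[OF stoch]) (use epos \<delta>pos Dpos in auto)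
    from eventually_conj[OF ev1 eventually_conj[OF ev2 eventually_conj[OF ev3 ev4]]]
    obtain n where n1: "19/20 * \<epsilon> < sqrt (Bn n h h) * R - \<bar>Bn n h f - c\<bar>"
      and n2: "19/20 * \<epsilon> < sqrt (Bn n h h) * R - \<bar>Bn n h g - c\<bar>"
      and n3: "0 < sqrt (Bn n h h)"
      and n4: "measure M {\<omega>\<in>space M. \<bar>dyadic_stoch_sum (model_X f g Y W) h n \<omega> - I \<omega>\<bar> > \<epsilon>/100} < 2/5 * \<delta> * \<epsilon> / \<Delta>"
      unfolding eventually_sequentially by blast
    define d where "d k = 2^n * SI n h k" for k
    define Z where "Z = Zn W d n"
    define \<sigma> where "\<sigma> = sqrt (Bn n h h)"
    have \<sigma>pos: "0 < \<sigma>" using n3 unfolding \<sigma>_def .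
    have Bsum: "Bn n h h = (\<Sum>k<2^n. (d k)\<^sup>2 / 2^n)"
    proof -
      have "(d k)\<^sup>2 / 2^n = 2^n * (SI n h k * SI n h k)" for k
        unfolding d_def by (simp add: power2_eq_square field_simps)
      then show ?thesis unfolding Bn_def by (simp add: sum_distrib_left)
    qed
    have Kne: "{k. k < 2^n \<and> d k \<noteq> 0} \<noteq> {}"
    proof
      assume "{k. k < 2^n \<and> d k \<noteq> 0} = {}"
      then have "\<forall>k<2^n. d k = 0" by auto
      then have "Bn n h h = 0" unfolding Bsum by simp
      then show False using \<sigma>pos unfolding \<sigma>_def by simp
    qed
    have distZ: "distributed M lborel Z (normal_density 0 \<sigma>)"
      using bm_Zn[OF assms(8) Kne] unfolding Z_def \<sigma>_def Bsum .
    have \<sigma>le: "\<sigma> \<le> \<Delta>"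
    proof -
      have "0 \<le> Gn n h h" by (rule Qn_nonneg[OF Lh])
      then have "Bn n h h \<le> \<Delta>\<^sup>2" unfolding Gn_def D2 by simp
      then have "\<sigma> \<le> sqrt (\<Delta>\<^sup>2)" unfolding \<sigma>_def by (rule real_sqrt_le_mono)
      then show ?thesis using Dpos by simp
    qed
    have Wm: "\<And>t. t \<in> {0..1} \<Longrightarrow> W t \<in> borel_measurable M"
      using assms(8) unfolding brownian_motion_01_def by blast
    have Zm[measurable]: "Z \<in> borel_measurable M" unfolding Z_def by (rule Zn_meas[OF Wm])
    have Im[measurable]: "I \<in> borel_measurable M" using assms(10) unfolding is_stoch_integral_def by blast
    have Ym[measurable]: "Y \<in> borel_measurable M" by (rule assms(5))
    define S where "S \<omega> = dyadic_stoch_sum (model_X f g Y W) h n \<omega>" for \<omega>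
    have Sdec: "S \<omega> = Y \<omega> * Bn n h f + (1 - Y \<omega>) * Bn n h g + Z \<omega>" for \<omega>
      unfolding S_def Z_def d_def h_def by (rule dyadic_decomp[OF Lf Lg])
    have Sm[measurable]: "S \<in> borel_measurable M"
    proof -
      have "S = (\<lambda>\<omega>. Y \<omega> * Bn n h f + (1 - Y \<omega>) * Bn n h g + Z \<omega>)" using Sdec by auto
      moreover have "(\<lambda>\<omega>. Y \<omega> * Bn n h f + (1 - Y \<omega>) * Bn n h g + Z \<omega>) \<in> borel_measurable M" by measurable
      ultimately show ?thesis by simp
    qed
    define e where "e = \<epsilon> / 100"
    define \<beta> where "\<beta> = 19/20 * \<epsilon>"
    define \<alpha> where "\<alpha> = 25/6 * \<delta> * \<epsilon>"
    define ma where "ma = Bn n h f - c"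
    define mb where "mb = Bn n h g - c"
    have \<delta>b: "\<delta> \<le> 2/15" unfolding \<delta>_def R_def using delta_bound[of \<Delta>] Dpos by simp
    have \<alpha>0: "0 \<le> \<alpha>" unfolding \<alpha>_def using \<delta>pos epos by simp
    have "\<delta> * \<epsilon> \<le> 2/15 * \<epsilon>" using \<delta>b epos by (intro mult_right_mono) auto
    then have \<alpha>b: "\<alpha> \<le> 5/9 * \<epsilon>" unfolding \<alpha>_def by simp
    define L where "L = \<beta> - \<alpha> - 2 * e"
    have Lb: "7/20 * \<epsilon> \<le> L" unfolding L_def \<beta>_def e_def using \<alpha>b epos by linarith
    have e0: "0 < e" unfolding e_def using epos by simp
    have \<beta>4: "\<beta> \<le> 1/4" unfolding \<beta>_def using e4 by simp
    have cst: "exp (- R\<^sup>2 / 2) / (\<sigma> * sqrt (2 * pi)) = 2 * \<delta> / \<sigma>"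
      unfolding \<delta>_def using \<sigma>pos by (simp add: field_simps)
    define Y1 where "Y1 = {\<omega>\<in>space M. Y \<omega> = 1}"
    define Y0 where "Y0 = {\<omega>\<in>space M. Y \<omega> = 0}"
    have Y1s[measurable]: "Y1 \<in> sets M" unfolding Y1_def by measurable
    have Y0s[measurable]: "Y0 \<in> sets M" unfolding Y0_def by measurable
    have pY1: "prob Y1 = 1/2" using assms(7) unfolding Y1_def .
    have pY0: "prob Y0 = 1/2"
    proof -
      have "Y0 = space M - Y1" unfolding Y0_def Y1_def using assms(6) by auto
      then show ?thesis using prob_compl[OF Y1s] pY1 by simp
    qed
    have QP: "L * \<delta> / \<Delta> \<le> prob ({\<omega>\<in>space M. Y \<omega> = y} \<inter> {\<omega>\<in>space M. Z \<omega> \<in> {u..v}})"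
      if py: "prob {\<omega>\<in>space M. Y \<omega> = y} = 1/2" and uv: "v - u = L"
        and bnd: "\<And>x. x \<in> {u..v} \<Longrightarrow> \<bar>x\<bar> \<le> \<sigma> * R" for y u v
    proof -
      have uv': "u \<le> v" using uv Lb epos by simp
      have ind: "prob ({\<omega>\<in>space M. Y \<omega> = y} \<inter> {\<omega>\<in>space M. Z \<omega> \<in> {u..v}})
              = prob {\<omega>\<in>space M. Y \<omega> = y} * prob {\<omega>\<in>space M. Z \<omega> \<in> {u..v}}"
        unfolding Z_def by (rule indep_Y_Z[OF assms(1) assms(9)]) simp
      have "(v - u) * (exp (- R\<^sup>2 / 2) / (\<sigma> * sqrt (2 * pi))) / 2
           \<le> prob ({\<omega>\<in>space M. Y \<omega> = y} \<inter> {\<omega>\<in>space M. Z \<omega> \<in> {u..v}})"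
        by (rule quarter_bound[OF distZ \<sigma>pos ind py uv' bnd])
      moreover have "(v - u) * (exp (- R\<^sup>2 / 2) / (\<sigma> * sqrt (2 * pi))) / 2 = L * \<delta> / \<sigma>"
        unfolding cst uv by simp
      moreover have "L * \<delta> / \<Delta> \<le> L * \<delta> / \<sigma>"
        using \<sigma>pos \<sigma>le Lb epos \<delta>pos by (intro divide_left_mono mult_nonneg_nonneg) auto
      ultimately show ?thesis by linarith
    qed
    have bnd: "\<bar>x\<bar> \<le> \<sigma> * R"
      if m: "\<beta> + \<bar>m\<bar> < \<sigma> * R" and x: "x \<in> {\<alpha> + e - m..\<beta> - e - m} \<union> {- \<beta> + e - m..- \<alpha> - e - m}" for x m
    proof -
      have "\<bar>x + m\<bar> \<le> \<beta>" using x \<alpha>0 e0 by auto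
      then show ?thesis using m by linarith
    qed
    have ma_b: "\<beta> + \<bar>ma\<bar> < \<sigma> * R" using n1 unfolding \<beta>_def ma_def \<sigma>_def by linarith
    have mb_b: "\<beta> + \<bar>mb\<bar> < \<sigma> * R" using n2 unfolding \<beta>_def mb_def \<sigma>_def by linarith
    define A1p where "A1p = Y1 \<inter> {\<omega>\<in>space M. Z \<omega> \<in> {\<alpha> + e - ma..\<beta> - e - ma}}"
    define A1n where "A1n = Y1 \<inter> {\<omega>\<in>space M. Z \<omega> \<in> {- \<beta> + e - ma..- \<alpha> - e - ma}}"
    define A0p where "A0p = Y0 \<inter> {\<omega>\<in>space M. Z \<omega> \<in> {\<alpha> + e - mb..\<beta> - e - mb}}"
    define A0n where "A0n = Y0 \<inter> {\<omega>\<in>space M. Z \<omega> \<in> {- \<beta> + e - mb..- \<alpha> - e - mb}}"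
    have P1p: "L * \<delta> / \<Delta> \<le> prob A1p" unfolding A1p_def Y1_def
      by (rule QP) (use pY1 bnd[OF ma_b] in \<open>auto simp: Y1_def L_def\<close>)
    have P1n: "L * \<delta> / \<Delta> \<le> prob A1n" unfolding A1n_def Y1_def
      by (rule QP) (use pY1 bnd[OF ma_b] in \<open>auto simp: Y1_def L_def\<close>)
    have P0p: "L * \<delta> / \<Delta> \<le> prob A0p" unfolding A0p_def Y0_def
      by (rule QP) (use pY0 bnd[OF mb_b] in \<open>auto simp: Y0_def L_def\<close>)
    have P0n: "L * \<delta> / \<Delta> \<le> prob A0n" unfolding A0n_def Y0_def
      by (rule QP) (use pY0 bnd[OF mb_b] in \<open>auto simp: Y0_def L_def\<close>)
    have sets4[measurable]: "A1p \<in> sets M" "A1n \<in> sets M" "A0p \<in> sets M" "A0n \<in> sets M"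
      unfolding A1p_def A1n_def A0p_def A0n_def by measurable
    define Bad where "Bad = {\<omega>\<in>space M. \<bar>S \<omega> - I \<omega>\<bar> > e}"
    have Bads[measurable]: "Bad \<in> sets M" unfolding Bad_def by measurable
    have pBad: "prob Bad < 2/5 * \<delta> * \<epsilon> / \<Delta>" using n4 unfolding Bad_def S_def e_def .
    have Es[measurable]: "E \<in> sets M"
    proof -
      have "E = {\<omega>\<in>space M. \<delta> * \<epsilon> \<le> \<bar>exp (I \<omega> - c) / (1 + exp (I \<omega> - c)) - 1/2\<bar> \<and>
                 \<bar>exp (I \<omega> - c) / (1 + exp (I \<omega> - c)) - 1/2\<bar> \<le> \<epsilon>}"
        unfolding E_def eta logi_def ..
      also have "\<dots> \<in> sets M" by measurable
      finally show ?thesis .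
    qed
    have inE: "\<omega> \<in> E" if w: "\<omega> \<in> space M" "\<alpha> + e \<le> \<bar>S \<omega> - c\<bar>" "\<bar>S \<omega> - c\<bar> \<le> \<beta> - e" "\<omega> \<notin> Bad" for \<omega>
    proof -
      have "\<bar>S \<omega> - I \<omega>\<bar> \<le> e" using w unfolding Bad_def by auto
      then have a1: "\<alpha> \<le> \<bar>I \<omega> - c\<bar>" and a2: "\<bar>I \<omega> - c\<bar> \<le> \<beta>" using w by linarith+
      from logi_band[OF a1 a2 \<alpha>0 \<beta>4]
      have "6/25 * \<alpha> \<le> \<bar>logi (I \<omega> - c) - 1/2\<bar> \<and> \<bar>logi (I \<omega> - c) - 1/2\<bar> \<le> \<beta> / 2" .
      moreover have "6/25 * \<alpha> = \<delta> * \<epsilon>" unfolding \<alpha>_def by simp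
      moreover have "\<beta> / 2 \<le> \<epsilon>" unfolding \<beta>_def using epos by simp
      ultimately show ?thesis unfolding E_def eta using w(1) by auto
    qed
    have cover: "A1p \<union> A1n \<union> (A0p \<union> A0n) \<subseteq> E \<union> Bad"
    proof
      fix \<omega> assume w: "\<omega> \<in> A1p \<union> A1n \<union> (A0p \<union> A0n)"
      then have sp: "\<omega> \<in> space M" unfolding A1p_def A1n_def A0p_def A0n_def by auto
      have "\<alpha> + e \<le> \<bar>S \<omega> - c\<bar> \<and> \<bar>S \<omega> - c\<bar> \<le> \<beta> - e"
      proof -
        { assume "\<omega> \<in> A1p \<or> \<omega> \<in> A1n"
          then have Y1w: "Y \<omega> = 1" and Zw: "Z \<omega> \<in> {\<alpha> + e - ma..\<beta> - e - ma} \<union> {- \<beta> + e - ma..- \<alpha> - e - ma}"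
            unfolding A1p_def A1n_def Y1_def by auto
          have "S \<omega> - c = ma + Z \<omega>" unfolding Sdec Y1w ma_def by simp
          then have ?thesis using Zw \<alpha>0 e0 by auto }
        moreover
        { assume "\<omega> \<in> A0p \<or> \<omega> \<in> A0n"
          then have Y0w: "Y \<omega> = 0" and Zw: "Z \<omega> \<in> {\<alpha> + e - mb..\<beta> - e - mb} \<union> {- \<beta> + e - mb..- \<alpha> - e - mb}"
            unfolding A0p_def A0n_def Y0_def by auto
          have "S \<omega> - c = mb + Z \<omega>" unfolding Sdec Y0w mb_def by simp
          then have ?thesis using Zw \<alpha>0 e0 by auto }
        ultimately show ?thesis using w by blast
      qed
      then show "\<omega> \<in> E \<union> Bad" using inE[OF sp] by blast
    qed
    have d1: "A1p \<inter> A1n = {}" unfolding A1p_def A1n_def using \<alpha>0 e0 by auto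
    have d0: "A0p \<inter> A0n = {}" unfolding A0p_def A0n_def using \<alpha>0 e0 by auto
    have d10: "(A1p \<union> A1n) \<inter> (A0p \<union> A0n) = {}" unfolding A1p_def A1n_def A0p_def A0n_def Y1_def Y0_def by auto
    have m0: "prob (A1p \<union> A1n \<union> (A0p \<union> A0n)) = prob A1p + prob A1n + (prob A0p + prob A0n)"
      using finite_measure_Union[of A1p A1n] finite_measure_Union[of A0p A0n]
        finite_measure_Union[of "A1p \<union> A1n" "A0p \<union> A0n"] d1 d0 d10 by simp
    have m1: "prob (A1p \<union> A1n \<union> (A0p \<union> A0n)) \<le> prob (E \<union> Bad)"
      by (rule finite_measure_mono[OF cover]) simp
    have m2: "prob (E \<union> Bad) = prob E + prob (Bad - E)" by (rule finite_measure_Union') simp_all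
    have m3: "prob (Bad - E) \<le> prob Bad" by (rule finite_measure_mono) auto
    have tot: "4 * (L * \<delta> / \<Delta>) \<le> prob E + prob Bad"
      using m0 m1 m2 m3 P1p P1n P0p P0n by linarith
    have "0 \<le> (4 * L - 7/5 * \<epsilon>) * \<delta> / \<Delta>"
      using Lb \<delta>pos Dpos by (intro divide_nonneg_pos mult_nonneg_nonneg) auto
    moreover have "(4 * L - 7/5 * \<epsilon>) * \<delta> / \<Delta> = 4 * (L * \<delta> / \<Delta>) - 2/5 * \<delta> * \<epsilon> / \<Delta> - \<delta> * \<epsilon> / \<Delta>"
      using Dpos by (simp add: field_simps)
    ultimately have "\<delta> * \<epsilon> / \<Delta> \<le> 4 * (L * \<delta> / \<Delta>) - 2/5 * \<delta> * \<epsilon> / \<Delta>" by linarith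
    then show ?thesis unfolding goal_eq using tot pBad by linarith
  qed
qed



end
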